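(* In a $2^K$ factorial experiment with a set of effects of interest $\mathcal F_+\subsetneq\mathcal P_K$, for each $*\in\{N,F,L\}$, $\tilde\tau_{*,u,+}=C_{S,+}\hat Y_{*,r}$ and $\tilde\Omega_{*,u,+}=C_{S,+}\hat\Psi_{*,r}C_{S,+}^T$.
   Context: A $2^K$ factorial experiment: $K$ binary factors, $Q=2^K$ treatment levels $q=(z_1,\dots,z_K)\in\{-1,+1\}^K$ identified with $1,\dots,Q$ in lexicographical order ($-1$ before $+1$). $N$ units with outcomes $Y_i$, covariates $x_i\in\mathbb R^J$ ($\sum_ix_i=0$), factor levels $Z_{ik}\in\{-1,+1\}$, and treatment indicator vector $t_i\in\{0,1\}^Q$. $\mathcal P_K$ is the set of nonempty subsets of $\{1,\dots,K\}$, $Z_{i,\mathcal K}=\prod_{k\in\mathcal K}Z_{ik}$, $c_{\mathcal K}\in\mathbb R^Q$ has entry $2^{-(K-1)}\prod_{k\in\mathcal K}z_k$ at level $(z_1,\dots,z_K)$. Given $\mathcal F_+\subsetneq\mathcal P_K$ with $\mathcal F_-=\mathcal P_K\setminus\mathcal F_+\ne\emptyset$, $C_{S,+}$ (resp. $C_{S,-}$) is the matrix with rows $c_{\mathcal K}^T$, $\mathcal K\in\mathcal F_+$ (resp. $\mathcal F_-$). Factor-unsaturated OLS regressions: (N) $Y_i\sim1+\sum_{\mathcal K\in\mathcal F_+}Z_{i,\mathcal K}$; (F) $Y_i\sim1+\sum_{\mathcal K\in\mathcal F_+}Z_{i,\mathcal K}+x_i$; (L) $Y_i\sim1+\sum_{\mathcal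 K\in\mathcal F_+}Z_{i,\mathcal K}+x_i+\sum_{\mathcal K\in\mathcal F_+}Z_{i,\mathcal K}x_i$. $\tilde\tau_{*,u,+}$ is the vector of 2 times the OLS coefficients of $Z_{i,\mathcal K}$, $\mathcal K\in\mathcal F_+$ (ordered as the rows of $C_{S,+}$), and $\tilde\Omega_{*,u,+}$ its Eicker–Huber–White covariance estimator from the same fit (EHW for coefficients: corresponding block of $(X^TX)^{-1}X^T\mathrm{diag}(\hat\epsilon_i^2)X(X^TX)^{-1}$; scaled by 4). Restricted least squares: $\chi_{L,i}=(t_i^T,(t_i\otimes x_i)^T)^T$, $\chi_L$ the matrix with rows $\chi_{L,i}^T$ (assume $\chi_L^T\chi_L$ nonsingular); $\theta=(\theta_Y^T,\theta_\gamma^T)^T$ with $\theta_Y\in\mathbb R^Q$, $\theta_\gamma=(\theta_{\gamma,1}^T,\dots,\theta_{\gamma,Q}^T)^T$, $\theta_{\gamma,q}\in\mathbb R^J$. For a restriction $R\theta=0$, $\hat\theta_r=\arg\min_\theta\sum_i(Y_i-\chi_{L,i}^T\theta)^2$ s.t. $R\theta=0$; with $M_r=(\chi_L^T\chi_L)^{-1}R^T\{R(\chi_L^T\chi_L)^{-1}R^T\}^{-1}$, RLS residuals $\hat\epsilon_{r,i}$ and $\hat\Sigma_r=(\chi_L^T\chi_L)^{-1}\chi_L^T\mathrm{diag}(\hat\epsilon_{r,i}^2)\chi_L(\chi_L^T\chi_L)^{-1}$, the covariance estimator of the $\theta_Y$-part is the upper-left $Q\times Q$ block of $(I-M_rR)\hat\Sigma_r(I-M_rR)^T$.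 $\hat Y_{*,r}$ and $\hat\Psi_{*,r}$ are the $\theta_Y$-part of $\hat\theta_r$ and this covariance estimator under the restrictions: (N) $C_{S,-}\theta_Y=0$, $\theta_\gamma=0$; (F) $C_{S,-}\theta_Y=0$, $\theta_{\gamma,1}=\cdots=\theta_{\gamma,Q}$; (L) $C_{S,-}\theta_Y=0$, $(C_{S,-}\otimes I_J)\theta_\gamma=0$. *)

theory Defs
  imports Complex_Main "Jordan_Normal_Form.Matrix" "Jordan_Normal_Form.Gauss_Jordan_Elimination"
begin

(* Conventions: factors are indexed 0..K-1, units 0..N-1, covariates 0..J-1,
   treatment levels 0..Q-1 with Q = 2^K (0-based versions of 1..K, 1..N, 1..J, 1..Q). *)

(* matrix inverse (used only for nonsingular square matrices) *)
definition minv :: "real mat \<Rightarrow> real mat" where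
  "minv A = (case mat_inverse A of Some B \<Rightarrow> B | None \<Rightarrow> 0\<^sub>m (dim_row A) (dim_col A))"

definition effects :: "nat \<Rightarrow> nat set set" where
  "effects K = {S. S \<subseteq> {0..<K} \<and> S \<noteq> {}}"

(* z_k of treatment level q (lexicographic order, -1 before +1, factor 0 most significant) *)
definition lvl_z :: "nat \<Rightarrow> nat \<Rightarrow> nat \<Rightarrow> real" where
  "lvl_z K q k = (if odd (q div 2 ^ (K - 1 - k)) then 1 else -1)"

definition unit_level :: "nat \<Rightarrow> (nat \<Rightarrow> nat \<Rightarrow> real) \<Rightarrow> nat \<Rightarrow> nat" where
  "unit_level K Z i = (\<Sum>k<K. if Z i k = 1 then 2 ^ (K - 1 - k) else 0)"

definition tind :: "nat \<Rightarrow> (nat \<Rightarrow> nat \<Rightarrow> real) \<Rightarrow> nat \<Rightarrow> nat \<Rightarrow> real" where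
  "tind K Z i q = (if q = unit_level K Z i then 1 else 0)"

definition Zprod :: "(nat \<Rightarrow> nat \<Rightarrow> real) \<Rightarrow> nat \<Rightarrow> nat set \<Rightarrow> real" where
  "Zprod Z i S = (\<Prod>k\<in>S. Z i k)"

definition cvec :: "nat \<Rightarrow> nat set \<Rightarrow> real vec" where
  "cvec K S = vec (2 ^ K) (\<lambda>q. (1 / 2 ^ (K - 1)) * (\<Prod>k\<in>S. lvl_z K q k))"

definition Cmat :: "nat \<Rightarrow> nat set list \<Rightarrow> real mat" where
  "Cmat K Fs = mat (length Fs) (2 ^ K) (\<lambda>(r, q). cvec K (Fs ! r) $ q)"

definition ols :: "real mat \<Rightarrow> real vec \<Rightarrow> real vec" where
  "ols X Y = minv (transpose_mat X * X) *\<^sub>v (transpose_mat X *\<^sub>v Y)"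

definition ehw :: "real mat \<Rightarrow> real vec \<Rightarrow> real mat" where
  "ehw X Y = (let A = minv (transpose_mat X * X);
                  e = Y - X *\<^sub>v ols X Y
              in A * transpose_mat X * mat_diag (dim_row X) (\<lambda>i. (e $ i)\<^sup>2) * X * A)"

definition X_N :: "nat \<Rightarrow> (nat \<Rightarrow> nat \<Rightarrow> real) \<Rightarrow> nat set list \<Rightarrow> real mat" where
  "X_N N Z Fp = mat N (1 + length Fp)
     (\<lambda>(i, c). if c = 0 then 1 else Zprod Z i (Fp ! (c - 1)))"

definition X_F :: "nat \<Rightarrow> nat \<Rightarrow> (nat \<Rightarrow> nat \<Rightarrow> real) \<Rightarrow> (nat \<Rightarrow> nat \<Rightarrow> real) \<Rightarrow> nat set list \<Rightarrow> real mat" where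
  "X_F N J Z x Fp = mat N (1 + length Fp + J)
     (\<lambda>(i, c). if c = 0 then 1
              else if c \<le> length Fp then Zprod Z i (Fp ! (c - 1))
              else x i (c - 1 - length Fp))"

definition X_L :: "nat \<Rightarrow> nat \<Rightarrow> (nat \<Rightarrow> nat \<Rightarrow> real) \<Rightarrow> (nat \<Rightarrow> nat \<Rightarrow> real) \<Rightarrow> nat set list \<Rightarrow> real mat" where
  "X_L N J Z x Fp = mat N (1 + length Fp + J + length Fp * J)
     (\<lambda>(i, c). if c = 0 then 1
              else if c \<le> length Fp then Zprod Z i (Fp ! (c - 1))
              else if c < 1 + length Fp + J then x i (c - 1 - length Fp)
              else (let d = c - 1 - length Fp - J in
                    Zprod Z i (Fp ! (d div J)) * x i (d mod J)))"

definition tau_u :: "nat \<Rightarrow> real mat \<Rightarrow> real vec \<Rightarrow> real vec" where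
  "tau_u p X Y = vec p (\<lambda>a. 2 * ols X Y $ (a + 1))"

definition Omega_u :: "nat \<Rightarrow> real mat \<Rightarrow> real vec \<Rightarrow> real mat" where
  "Omega_u p X Y = mat p p (\<lambda>(a, b). 4 * ehw X Y $$ (a + 1, b + 1))"

(* chi_L: rows (t_i^T, (t_i \<otimes> x_i)^T) *)
definition chiL :: "nat \<Rightarrow> nat \<Rightarrow> nat \<Rightarrow> (nat \<Rightarrow> nat \<Rightarrow> real) \<Rightarrow> (nat \<Rightarrow> nat \<Rightarrow> real) \<Rightarrow> real mat" where
  "chiL K N J Z x = mat N (2 ^ K + 2 ^ K * J)
     (\<lambda>(i, c). if c < 2 ^ K then tind K Z i c
              else tind K Z i ((c - 2 ^ K) div J) * x i ((c - 2 ^ K) mod J))"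

definition ssr :: "real mat \<Rightarrow> real vec \<Rightarrow> real vec \<Rightarrow> real" where
  "ssr chi Y \<theta> = (Y - chi *\<^sub>v \<theta>) \<bullet> (Y - chi *\<^sub>v \<theta>)"

definition rls :: "real mat \<Rightarrow> real vec \<Rightarrow> real mat \<Rightarrow> real vec" where
  "rls chi Y R = (THE \<theta>. \<theta> \<in> carrier_vec (dim_col chi) \<and> R *\<^sub>v \<theta> = 0\<^sub>v (dim_row R) \<and>
      (\<forall>\<theta>'\<in>carrier_vec (dim_col chi). R *\<^sub>v \<theta>' = 0\<^sub>v (dim_row R) \<longrightarrow> ssr chi Y \<theta> \<le> ssr chi Y \<theta>'))"

definition rls_cov_full :: "real mat \<Rightarrow> real vec \<Rightarrow> real mat \<Rightarrow> real mat" where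
  "rls_cov_full chi Y R = (let G = minv (transpose_mat chi * chi);
       M = G * transpose_mat R * minv (R * G * transpose_mat R);
       e = Y - chi *\<^sub>v rls chi Y R;
       S = G * transpose_mat chi * mat_diag (dim_row chi) (\<lambda>i. (e $ i)\<^sup>2) * chi * G;
       P = 1\<^sub>m (dim_col chi) - M * R
     in P * S * transpose_mat P)"

definition Yhat_r :: "nat \<Rightarrow> real mat \<Rightarrow> real vec \<Rightarrow> real mat \<Rightarrow> real vec" where
  "Yhat_r Q chi Y R = vec Q (\<lambda>q. rls chi Y R $ q)"

definition Psi_r :: "nat \<Rightarrow> real mat \<Rightarrow> real vec \<Rightarrow> real mat \<Rightarrow> real mat" where
  "Psi_r Q chi Y R = mat Q Q (\<lambda>(a, b). rls_cov_full chi Y R $$ (a, b))"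

(* restriction matrices; Cm = C_{S,-} (m x Q); parameter layout:
   theta_Y = entries 0..Q-1, theta_{gamma,q} entry j at index Q + q*J + j *)

(* (N): C_{S,-} theta_Y = 0, theta_gamma = 0 *)
definition R_N :: "nat \<Rightarrow> nat \<Rightarrow> real mat \<Rightarrow> real mat" where
  "R_N Q J Cm = mat (dim_row Cm + Q * J) (Q + Q * J)
     (\<lambda>(r, c). if r < dim_row Cm then (if c < Q then Cm $$ (r, c) else 0)
              else (if c = r - dim_row Cm + Q then 1 else 0))"

(* (F): C_{S,-} theta_Y = 0, theta_{gamma,q} = theta_{gamma,q+1} for q = 0..Q-2 *)
definition R_F :: "nat \<Rightarrow> nat \<Rightarrow> real mat \<Rightarrow> real mat" where
  "R_F Q J Cm = mat (dim_row Cm + (Q - 1) * J) (Q + Q * J)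
     (\<lambda>(r, c). if r < dim_row Cm then (if c < Q then Cm $$ (r, c) else 0)
              else (let r' = r - dim_row Cm in
                    if c = Q + r' then 1 else if c = Q + r' + J then -1 else 0))"

(* (L): C_{S,-} theta_Y = 0, (C_{S,-} \<otimes> I_J) theta_gamma = 0 *)
definition R_L :: "nat \<Rightarrow> nat \<Rightarrow> real mat \<Rightarrow> real mat" where
  "R_L Q J Cm = mat (dim_row Cm + dim_row Cm * J) (Q + Q * J)
     (\<lambda>(r, c). if r < dim_row Cm then (if c < Q then Cm $$ (r, c) else 0)
              else if c < Q then 0
              else (let r' = r - dim_row Cm; c' = c - Q in
                    if c' mod J = r' mod J then Cm $$ (r' div J, c' div J) else 0))"

end

theory Submission
  imports Defs "Jordan_Normal_Form.Determinant"
begin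

definition hg :: "nat \<Rightarrow> nat set \<Rightarrow> nat \<Rightarrow> real" where
  "hg K S q = (\<Prod>k\<in>S. lvl_z K q k)"

lemma lvl_z_pm: "lvl_z K q k = 1 \<or> lvl_z K q k = -1"
  unfolding lvl_z_def by auto

lemma lvl_z_sq: "lvl_z K q k * lvl_z K q k = 1"
  unfolding lvl_z_def by auto

lemma lvl_z_Suc:
  assumes "k < Suc K"
  shows "lvl_z (Suc K) q k = (if k = K then (if odd q then 1 else -1) else lvl_z K (q div 2) k)"
proof (cases "k = K")
  case True then show ?thesis by (simp add: lvl_z_def)
next
  case False
  then have k: "k < K" using assms by auto
  then have e: "Suc K - 1 - k = Suc (K - 1 - k)" by auto
  have "q div 2 ^ (Suc K - 1 - k) = q div 2 div 2 ^ (K - 1 - k)"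
    unfolding e by (simp add: div_mult2_eq)
  then show ?thesis using False by (simp add: lvl_z_def)
qed

lemma sum_double: "(\<Sum>q<2*n. h q) = (\<Sum>q<n. h (2*q) + h (2*q+1))" for h :: "nat \<Rightarrow> real"
  by (induction n) (auto simp: sum.distrib)

lemma sum_prod_lvl:
  "(\<Sum>q<2^K. \<Prod>k<K. f k (lvl_z K q k)) = (\<Prod>k<K. f k 1 + f k (-1))" for f :: "nat \<Rightarrow> real \<Rightarrow> real"
proof (induction K arbitrary: f)
  case 0
  then show ?case by simp
next
  case (Suc K)
  have eq: "(\<Prod>k<Suc K. f k (lvl_z (Suc K) q k)) =
      (\<Prod>k<K. f k (lvl_z K (q div 2) k)) * f K (if odd q then 1 else -1)" for q
    by (simp add: lvl_z_Suc)
  have "(\<Sum>q<2^Suc K. \<Prod>k<Suc K. f k (lvl_z (Suc K) q k))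
      = (\<Sum>q<2*2^K. (\<Prod>k<K. f k (lvl_z K (q div 2) k)) * f K (if odd q then 1 else -1))"
    unfolding eq by simp
  also have "\<dots> = (\<Sum>q<2^K. (\<Prod>k<K. f k (lvl_z K q k)) * (f K 1 + f K (-1)))"
    using sum_double[of "\<lambda>q. (\<Prod>k<K. f k (lvl_z K (q div 2) k)) * f K (if odd q then 1 else -1)" "2^K"]
    by (simp add: algebra_simps)
  also have "\<dots> = (\<Prod>k<K. f k 1 + f k (-1)) * (f K 1 + f K (-1))"
    unfolding sum_distrib_right[symmetric] Suc ..
  finally show ?case by simp
qed

lemma hg_as_prod: "S \<subseteq> {..<K} \<Longrightarrow> hg K S q = (\<Prod>k<K. if k \<in> S then lvl_z K q k else 1)"
proof -
  assume a: "S \<subseteq> {..<K}"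
  then have "{..<K} \<inter> S = S" by auto
  then show ?thesis
    unfolding hg_def using prod.inter_restrict[of "{..<K}" "\<lambda>k. lvl_z K q k" S] by simp
qed

lemma hg_orth:
  assumes "S \<subseteq> {..<K}" "T \<subseteq> {..<K}"
  shows "(\<Sum>q<2^K. hg K S q * hg K T q) = (if S = T then 2^K else 0)"
proof -
  let ?f = "\<lambda>k z. (if k \<in> S then z else 1) * (if k \<in> T then z else (1::real))"
  have "(\<Sum>q<2^K. hg K S q * hg K T q) = (\<Sum>q<2^K. \<Prod>k<K. ?f k (lvl_z K q k))"
    using assms by (simp add: hg_as_prod prod.distrib)
  also have "\<dots> = (\<Prod>k<K. ?f k 1 + ?f k (-1))" by (rule sum_prod_lvl)
  also have "\<dots> = (if S = T then 2^K else 0)"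
  proof (cases "S = T")
    case True
    then have "\<And>k. ?f k 1 + ?f k (-1) = 2" by auto
    then show ?thesis using True by simp
  next
    case False
    then obtain k where "k \<in> S \<and> k \<notin> T \<or> k \<in> T \<and> k \<notin> S" by blast
    then have "k < K" "?f k 1 + ?f k (-1) = 0" using assms by auto
    then have "(\<Prod>k<K. ?f k 1 + ?f k (-1)) = 0" by (subst prod.remove[of _ k]) auto
    then show ?thesis using False by simp
  qed
  finally show ?thesis .
qed

lemma lvl_inj:
  assumes "q < 2^K" "q' < 2^K" "\<forall>k<K. lvl_z K q k = lvl_z K q' k"
  shows "q = q'"
  using assms
proof (induction K arbitrary: q q')
  case 0 then show ?case by simp
next
  case (Suc K)
  have "q div 2 < 2^K" "q' div 2 < 2^K" using Suc.prems by auto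
  moreover have "\<forall>k<K. lvl_z K (q div 2) k = lvl_z K (q' div 2) k"
  proof (intro allI impI)
    fix k assume k: "k < K"
    then have "lvl_z (Suc K) q k = lvl_z (Suc K) q' k" using Suc.prems(3) by auto
    then show "lvl_z K (q div 2) k = lvl_z K (q' div 2) k" using k by (simp add: lvl_z_Suc)
  qed
  ultimately have d: "q div 2 = q' div 2" using Suc.IH by blast
  have "odd q \<longleftrightarrow> odd q'" using Suc.prems(3)[rule_format, of K] by (auto simp: lvl_z_Suc split: if_splits)
  then have "q mod 2 = q' mod 2" by (metis odd_iff_mod_2_eq_one even_iff_mod_2_eq_zero)
  then show ?case using d by (metis div_mult_mod_eq)
qed

lemma hg_compl:
  assumes "q < 2^K" "q' < 2^K"
  shows "(\<Sum>S\<in>Pow {..<K}. hg K S q * hg K S q') = (if q = q' then 2^K else 0)"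
proof -
  let ?a = "\<lambda>k. lvl_z K q k * lvl_z K q' k"
  have "(\<Sum>S\<in>Pow {..<K}. hg K S q * hg K S q') = (\<Sum>S\<in>Pow {..<K}. (\<Prod>k\<in>S. ?a k) * (\<Prod>k\<in>{..<K}-S. 1))"
    by (simp add: hg_def prod.distrib)
  also have "\<dots> = (\<Prod>k<K. ?a k + 1)" by (rule prod_add[symmetric]) simp
  also have "\<dots> = (if q = q' then 2^K else 0)"
  proof (cases "q = q'")
    case True
    then show ?thesis by (simp add: lvl_z_sq)
  next
    case False
    then obtain k where k: "k < K" "lvl_z K q k \<noteq> lvl_z K q' k" using lvl_inj assms by blast
    then have "?a k + 1 = 0" using lvl_z_pm[of K q k] lvl_z_pm[of K q' k] by auto
    then have "(\<Prod>k<K. ?a k + 1) = 0" using k by (subst prod.remove[of _ k]) auto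
    then show ?thesis using False by simp
  qed
  finally show ?thesis .
qed

lemma bits_level:
  fixes b :: "nat \<Rightarrow> bool"
  shows "(\<Sum>k<K. if b k then 2 ^ (K - 1 - k) else 0) < (2::nat)^K \<and>
    (\<forall>k<K. lvl_z K (\<Sum>k<K. if b k then 2 ^ (K - 1 - k) else 0) k = (if b k then 1 else -1))"
proof (induction K)
  case 0 then show ?case by simp
next
  case (Suc K)
  let ?v = "\<lambda>K. (\<Sum>k<K. if b k then 2 ^ (K - 1 - k) else (0::nat))"
  have rec: "?v (Suc K) = 2 * ?v K + (if b K then 1 else 0)"
  proof -
    have "?v (Suc K) = (\<Sum>k<K. if b k then 2 ^ (Suc K - 1 - k) else 0) + (if b K then 1 else 0)"
      by simp
    also have "(\<Sum>k<K. if b k then 2 ^ (Suc K - 1 - k) else (0::nat)) = (\<Sum>k<K. 2 * (if b k then 2 ^ (K - 1 - k) else 0))"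
      by (rule sum.cong) (auto simp: Suc_diff_Suc[symmetric] simp del: Suc_diff_Suc)
    finally show ?thesis by (simp add: sum_distrib_left)
  qed
  have d: "?v (Suc K) div 2 = ?v K" unfolding rec by auto
  have o: "odd (?v (Suc K)) = b K" unfolding rec by auto
  show ?case
  proof
    show "?v (Suc K) < 2 ^ Suc K" unfolding rec using Suc.IH by auto
    show "\<forall>k<Suc K. lvl_z (Suc K) (?v (Suc K)) k = (if b k then 1 else -1)"
    proof (intro allI impI)
      fix k assume k: "k < Suc K"
      have "lvl_z (Suc K) (?v (Suc K)) k = (if k = K then (if odd (?v (Suc K)) then 1 else -1)
          else lvl_z K (?v (Suc K) div 2) k)" by (rule lvl_z_Suc[OF k])
      also have "\<dots> = (if k = K then (if b K then 1 else -1) else lvl_z K (?v K) k)"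
        by (simp only: d o)
      also have "\<dots> = (if b k then 1 else -1)" using Suc.IH k by auto
      finally show "lvl_z (Suc K) (?v (Suc K)) k = (if b k then 1 else -1)" .
    qed
  qed
qed

lemma unit_level_props:
  assumes "\<And>k. k < K \<Longrightarrow> Z i k = 1 \<or> Z i k = -1"
  shows "unit_level K Z i < 2^K" "\<And>k. k < K \<Longrightarrow> lvl_z K (unit_level K Z i) k = Z i k"
proof -
  note bl = bits_level[of "\<lambda>k. Z i k = 1" K]
  show "unit_level K Z i < 2^K" using bl unfolding unit_level_def by auto
  fix k assume "k < K"
  then show "lvl_z K (unit_level K Z i) k = Z i k" using bl assms[of k] unfolding unit_level_def by auto
qed

lemma minv_props:
  fixes A :: "real mat"
  assumes A: "A \<in> carrier_mat n n" and d: "det A \<noteq> 0"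
  shows "minv A \<in> carrier_mat n n" "A * minv A = 1\<^sub>m n" "minv A * A = 1\<^sub>m n"
proof -
  have U: "A \<in> Units (ring_mat TYPE(real) n ())" by (rule det_non_zero_imp_unit[OF A d])
  have "mat_inverse A \<noteq> None"
  proof
    assume "mat_inverse A = None"
    from mat_inverse(1)[OF A this] have "A \<notin> Units (ring_mat TYPE(real) n ())" .
    with U show False by simp
  qed
  then obtain B where B: "mat_inverse A = Some B" by blast
  have "A * B = 1\<^sub>m n \<and> B * A = 1\<^sub>m n \<and> B \<in> carrier_mat n n" by (rule mat_inverse(2)[OF A B])
  moreover have "minv A = B" using B by (simp add: minv_def)
  ultimately show "minv A \<in> carrier_mat n n" "A * minv A = 1\<^sub>m n" "minv A * A = 1\<^sub>m n" by auto
qed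

lemma invertible_det:
  fixes A :: "real mat"
  assumes inv: "invertible_mat A" and A: "A \<in> carrier_mat n n"
  shows "det A \<noteq> 0"
proof -
  from inv obtain B where AB: "A * B = 1\<^sub>m (dim_row A)" and BA: "B * A = 1\<^sub>m (dim_row B)"
    unfolding invertible_mat_def inverts_mat_def by blast
  have "dim_col B = n" using arg_cong[OF AB, of dim_col] A by simp
  moreover have "dim_row B = n" using arg_cong[OF BA, of dim_col] A by simp
  ultimately have B: "B \<in> carrier_mat n n" by auto
  have "det A * det B = 1" using det_mult[OF A B] AB A by simp
  then show ?thesis by auto
qed

lemma self_scalar_zero:
  fixes v :: "real vec"
  assumes v: "v \<in> carrier_vec n" and z: "v \<bullet> v = 0"
  shows "v = 0\<^sub>v n"
proof -
  have "(\<Sum>i\<in>{0..<n}. v $ i * v $ i) = 0" using z v unfolding scalar_prod_def by simp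
  then have "\<forall>i\<in>{0..<n}. v $ i * v $ i = 0"
    by (subst sum_nonneg_eq_0_iff[symmetric]) auto
  then show ?thesis using v by (intro eq_vecI) auto
qed

lemma kernel_gram:
  fixes M :: "real mat"
  assumes M: "M \<in> carrier_mat n k" and v: "v \<in> carrier_vec k"
    and z: "(transpose_mat M * M) *\<^sub>v v = 0\<^sub>v k"
  shows "M *\<^sub>v v = 0\<^sub>v n"
proof -
  have "(transpose_mat M *\<^sub>v (M *\<^sub>v v)) = 0\<^sub>v k" using z M v by simp
  then have "(transpose_mat M *\<^sub>v (M *\<^sub>v v)) \<bullet> v = 0" using v by simp
  then have "(M *\<^sub>v v) \<bullet> (M *\<^sub>v v) = 0"
    using transpose_vec_mult_scalar[OF M v, of "M *\<^sub>v v"] M v by simp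
  then show ?thesis using self_scalar_zero[of "M *\<^sub>v v" n] M v by simp
qed

lemma det_kernel:
  fixes A :: "real mat"
  assumes A: "A \<in> carrier_mat n n"
    and k: "\<And>v. v \<in> carrier_vec n \<Longrightarrow> A *\<^sub>v v = 0\<^sub>v n \<Longrightarrow> v = 0\<^sub>v n"
  shows "det A \<noteq> 0"
  using det_0_iff_vec_prod_zero[OF A] k by blast

lemma gram_det:
  fixes M :: "real mat"
  assumes M: "M \<in> carrier_mat n k"
    and k: "\<And>v. v \<in> carrier_vec k \<Longrightarrow> M *\<^sub>v v = 0\<^sub>v n \<Longrightarrow> v = 0\<^sub>v k"
  shows "det (transpose_mat M * M) \<noteq> 0"
proof (rule det_kernel[of _ k])
  show "transpose_mat M * M \<in> carrier_mat k k" using M by simp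
  fix v assume v: "v \<in> carrier_vec k" and z: "transpose_mat M * M *\<^sub>v v = 0\<^sub>v k"
  show "v = 0\<^sub>v k" using k[OF v kernel_gram[OF M v z]] .
qed

lemma sym_inv:
  fixes H G :: "real mat"
  assumes H: "H \<in> carrier_mat n n" and G: "G \<in> carrier_mat n n"
    and HG: "H * G = 1\<^sub>m n" and GH: "G * H = 1\<^sub>m n" and sym: "transpose_mat H = H"
  shows "transpose_mat G = G"
proof -
  have "transpose_mat G * H = 1\<^sub>m n"
    using arg_cong[OF HG, of transpose_mat] transpose_mult[OF H G] sym by simp
  then have "transpose_mat G * H * G = G" using G by simp
  moreover have "transpose_mat G * H * G = transpose_mat G * (H * G)"
    by (rule assoc_mult_mat[of _ n n _ n _ n]) (use G H in auto)
  ultimately show ?thesis using G HG by simp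
qed

lemma compl_mat:
  fixes R B Lb M :: "real mat"
  assumes R: "R \<in> carrier_mat r d" and B: "B \<in> carrier_mat d k" and Lb: "Lb \<in> carrier_mat k d"
    and M: "M \<in> carrier_mat d c" and RM: "R * M = 0\<^sub>m r c"
    and compl: "\<And>\<theta>. \<theta> \<in> carrier_vec d \<Longrightarrow> R *\<^sub>v \<theta> = 0\<^sub>v r \<Longrightarrow> B *\<^sub>v (Lb *\<^sub>v \<theta>) = \<theta>"
  shows "B * (Lb * M) = M"
proof (rule mat_col_eqI)
  fix j assume j: "j < dim_col M"
  have "R *\<^sub>v col M j = col (R * M) j" using col_mult2[OF R M, of j] M j by simp
  also have "\<dots> = 0\<^sub>v r" using RM j M by simp
  finally have "B *\<^sub>v (Lb *\<^sub>v col M j) = col M j" using compl M j by simp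
  moreover have "col (B * (Lb * M)) j = B *\<^sub>v (Lb *\<^sub>v col M j)"
    using col_mult2[OF B, of "Lb * M" c j] col_mult2[OF Lb M, of j] Lb M j by simp
  ultimately show "col (B * (Lb * M)) j = col M j" by simp
qed (use B Lb M in auto)

lemma assoc_dim: "dim_col A = dim_row B \<Longrightarrow> dim_col B = dim_row C \<Longrightarrow> (A::real mat) * B * C = A * (B * C)"
  by (rule assoc_mult_mat[of A "dim_row A" "dim_col A" B "dim_col B" C "dim_col C"]) auto
lemma transpose_mult_dim: "dim_col A = dim_row B \<Longrightarrow> transpose_mat ((A::real mat) * B) = transpose_mat B * transpose_mat A"
  by (rule transpose_mult[of A "dim_row A" "dim_col A" B "dim_col B"]) auto
lemma assoc_vec_dim: "dim_col A = dim_row B \<Longrightarrow> dim_col B = dim_vec v \<Longrightarrow> ((A::real mat) * B) *\<^sub>v v = A *\<^sub>v (B *\<^sub>v v)"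
  by (rule assoc_mult_mat_vec[of A "dim_row A" "dim_col A" B "dim_col B" v]) auto
lemma mult_minus_dim: "dim_col A = dim_row B \<Longrightarrow> dim_row B = dim_row C \<Longrightarrow> dim_col B = dim_col C \<Longrightarrow>
    (A::real mat) * (B - C) = A * B - A * C"
  by (rule mult_minus_distrib_mat[of A "dim_row A" "dim_col A" B "dim_col B" C]) auto
lemma minus_mult_dim: "dim_row A = dim_row B \<Longrightarrow> dim_col A = dim_col B \<Longrightarrow> dim_col A = dim_row C \<Longrightarrow>
    ((A::real mat) - B) * C = A * C - B * C"
  by (rule minus_mult_distrib_mat[of A "dim_row A" "dim_col A" B C "dim_col C"]) auto

lemma sq_expand:
  fixes u w :: "real vec"
  assumes "u \<in> carrier_vec n" "w \<in> carrier_vec n"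
  shows "(u + w) \<bullet> (u + w) = u \<bullet> u + 2 * (u \<bullet> w) + w \<bullet> w"
  using assms unfolding scalar_prod_def
  by (simp add: sum.distrib algebra_simps sum_distrib_left)

lemma self_scalar_nonneg: "(v::real vec) \<bullet> v \<ge> 0"
  unfolding scalar_prod_def by (auto intro: sum_nonneg)

lemma mat_vec_zero[simp]: "A \<in> carrier_mat n m \<Longrightarrow> A *\<^sub>v 0\<^sub>v m = (0\<^sub>v n :: real vec)"
  by (intro eq_vecI) auto

lemma zero_mat_vec[simp]: "v \<in> carrier_vec m \<Longrightarrow> 0\<^sub>m n m *\<^sub>v v = (0\<^sub>v n :: real vec)"
  by (intro eq_vecI) (auto simp: scalar_prod_def)

lemma rls_core:
  fixes chi R B Sr Lb :: "real mat" and Yv :: "real vec"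
  assumes chi: "chi \<in> carrier_mat n d" and Hdet: "det (transpose_mat chi * chi) \<noteq> 0"
    and R: "R \<in> carrier_mat r d" and Sr: "Sr \<in> carrier_mat d r" and RS: "R * Sr = 1\<^sub>m r"
    and B: "B \<in> carrier_mat d k" and Lb: "Lb \<in> carrier_mat k d" and LB: "Lb * B = 1\<^sub>m k"
    and RB: "R * B = 0\<^sub>m r k"
    and compl: "\<And>\<theta>. \<theta> \<in> carrier_vec d \<Longrightarrow> R *\<^sub>v \<theta> = 0\<^sub>v r \<Longrightarrow> B *\<^sub>v (Lb *\<^sub>v \<theta>) = \<theta>"
    and Y: "Yv \<in> carrier_vec n"
  shows "rls chi Yv R = B *\<^sub>v ols (chi * B) Yv"
    "rls_cov_full chi Yv R = B * ehw (chi * B) Yv * transpose_mat B"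
proof -
  note dims = carrier_matD[OF chi] carrier_matD[OF R] carrier_matD[OF Sr] carrier_matD[OF B] carrier_matD[OF Lb]
  define H where "H = transpose_mat chi * chi"
  have H: "H \<in> carrier_mat d d" using chi unfolding H_def by simp
  define G where "G = minv H"
  note Gp = minv_props[OF H Hdet[folded H_def], folded G_def]
  have G: "G \<in> carrier_mat d d" and HG: "H * G = 1\<^sub>m d" and GH: "G * H = 1\<^sub>m d" using Gp by auto
  have Hsym: "transpose_mat H = H" unfolding H_def using chi by (simp add: transpose_mult_dim)
  have Gsym: "transpose_mat G = G" by (rule sym_inv[OF H G HG GH Hsym])
  note dims2 = carrier_matD[OF H] carrier_matD[OF G]
  have chi_inj: "w = 0\<^sub>v d" if w: "w \<in> carrier_vec d" and z: "chi *\<^sub>v w = 0\<^sub>v n" for w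
  proof -
    have "H *\<^sub>v w = transpose_mat chi *\<^sub>v (chi *\<^sub>v w)" unfolding H_def using chi w by simp
    also have "\<dots> = 0\<^sub>v d" using z chi by simp
    finally have "G *\<^sub>v (H *\<^sub>v w) = 0\<^sub>v d" using G by simp
    moreover have "G *\<^sub>v (H *\<^sub>v w) = w" using assoc_mult_mat_vec[OF G H w, symmetric] GH w by simp
    ultimately show ?thesis by simp
  qed
  define X where "X = chi * B"
  have X: "X \<in> carrier_mat n k" unfolding X_def using chi B by simp
  have X_inj: "v = 0\<^sub>v k" if v: "v \<in> carrier_vec k" and z: "X *\<^sub>v v = 0\<^sub>v n" for v
  proof -
    have "chi *\<^sub>v (B *\<^sub>v v) = 0\<^sub>v n" using z chi B v unfolding X_def by simp
    then have Bv: "B *\<^sub>v v = 0\<^sub>v d" using chi_inj B v by simp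
    have "v = (Lb * B) *\<^sub>v v" using LB v by simp
    also have "\<dots> = Lb *\<^sub>v (B *\<^sub>v v)" using Lb B v by simp
    finally show ?thesis using Bv Lb by simp
  qed
  define XtX where "XtX = transpose_mat X * X"
  have XtX: "XtX \<in> carrier_mat k k" unfolding XtX_def using X by simp
  have XtXdet: "det XtX \<noteq> 0" unfolding XtX_def by (rule gram_det[OF X X_inj])
  define A where "A = minv XtX"
  note Ap = minv_props[OF XtX XtXdet, folded A_def]
  have A: "A \<in> carrier_mat k k" and XA: "XtX * A = 1\<^sub>m k" and AX: "A * XtX = 1\<^sub>m k" using Ap by auto
  have XtXsym: "transpose_mat XtX = XtX" unfolding XtX_def using X by (simp add: transpose_mult_dim)
  have Asym: "transpose_mat A = A" by (rule sym_inv[OF XtX A XA AX XtXsym])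
  define \<beta> where "\<beta> = ols X Yv"
  have beta_def': "\<beta> = A *\<^sub>v (transpose_mat X *\<^sub>v Yv)" unfolding \<beta>_def ols_def A_def XtX_def ..
  have beta: "\<beta> \<in> carrier_vec k" unfolding beta_def' using A X Y by simp
  define e0 where "e0 = Yv - X *\<^sub>v \<beta>"
  have e0: "e0 \<in> carrier_vec n" unfolding e0_def using Y X beta by simp
  have normal: "transpose_mat X *\<^sub>v e0 = 0\<^sub>v k"
  proof -
    have "transpose_mat X *\<^sub>v e0 = transpose_mat X *\<^sub>v Yv - transpose_mat X *\<^sub>v (X *\<^sub>v \<beta>)"
      unfolding e0_def by (rule mult_minus_distrib_mat_vec[of _ k n]) (use X Y beta in auto)
    also have "transpose_mat X *\<^sub>v (X *\<^sub>v \<beta>) = XtX *\<^sub>v \<beta>"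
      unfolding XtX_def using X beta by simp
    also have "XtX *\<^sub>v \<beta> = (XtX * A) *\<^sub>v (transpose_mat X *\<^sub>v Yv)"
      unfolding beta_def' using XtX A X Y by simp
    also have "\<dots> = transpose_mat X *\<^sub>v Yv" using XA X Y by simp
    finally show ?thesis using X Y by simp
  qed
  have ssr_dec: "ssr chi Yv (B *\<^sub>v \<beta>') = ssr chi Yv (B *\<^sub>v \<beta>) + (X *\<^sub>v (\<beta> - \<beta>')) \<bullet> (X *\<^sub>v (\<beta> - \<beta>'))"
    if b': "\<beta>' \<in> carrier_vec k" for \<beta>'
  proof -
    have cx: "chi *\<^sub>v (B *\<^sub>v \<gamma>) = X *\<^sub>v \<gamma>" if "\<gamma> \<in> carrier_vec k" for \<gamma>
      unfolding X_def using chi B that by simp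
    have Xd: "X *\<^sub>v (\<beta> - \<beta>') = X *\<^sub>v \<beta> - X *\<^sub>v \<beta>'"
      by (rule mult_minus_distrib_mat_vec[OF X beta b'])
    have dec: "Yv - X *\<^sub>v \<beta>' = e0 + X *\<^sub>v (\<beta> - \<beta>')"
      unfolding Xd e0_def by (rule eq_vecI) (use X Y beta b' in auto)
    have orth: "e0 \<bullet> (X *\<^sub>v (\<beta> - \<beta>')) = 0"
      using transpose_vec_mult_scalar[OF X, of "\<beta> - \<beta>'" e0] normal beta b' e0 by simp
    have "ssr chi Yv (B *\<^sub>v \<beta>') = (e0 + X *\<^sub>v (\<beta> - \<beta>')) \<bullet> (e0 + X *\<^sub>v (\<beta> - \<beta>'))"
      unfolding ssr_def cx[OF b'] dec ..
    also have "\<dots> = e0 \<bullet> e0 + (X *\<^sub>v (\<beta> - \<beta>')) \<bullet> (X *\<^sub>v (\<beta> - \<beta>'))"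
      using sq_expand[OF e0, of "X *\<^sub>v (\<beta> - \<beta>')"] orth X beta b' by simp
    also have "e0 \<bullet> e0 = ssr chi Yv (B *\<^sub>v \<beta>)" unfolding ssr_def cx[OF beta] e0_def ..
    finally show ?thesis .
  qed
  have RBv: "R *\<^sub>v (B *\<^sub>v \<gamma>) = 0\<^sub>v r" if "\<gamma> \<in> carrier_vec k" for \<gamma>
  proof -
    have "R *\<^sub>v (B *\<^sub>v \<gamma>) = (R * B) *\<^sub>v \<gamma>" using R B that by simp
    then show ?thesis using RB that by simp
  qed
  have rls_eq: "rls chi Yv R = B *\<^sub>v \<beta>"
    unfolding rls_def
  proof (rule the_equality)
    let ?P = "\<lambda>\<theta>. \<theta> \<in> carrier_vec (dim_col chi) \<and> R *\<^sub>v \<theta> = 0\<^sub>v (dim_row R) \<and>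
      (\<forall>\<theta>'\<in>carrier_vec (dim_col chi). R *\<^sub>v \<theta>' = 0\<^sub>v (dim_row R) \<longrightarrow> ssr chi Yv \<theta> \<le> ssr chi Yv \<theta>')"
    have repr: "\<theta>' = B *\<^sub>v (Lb *\<^sub>v \<theta>')" "Lb *\<^sub>v \<theta>' \<in> carrier_vec k"
      if "\<theta>' \<in> carrier_vec d" "R *\<^sub>v \<theta>' = 0\<^sub>v r" for \<theta>'
      using compl[OF that] Lb that by auto
    show "?P (B *\<^sub>v \<beta>)"
    proof (intro conjI ballI impI)
      show "B *\<^sub>v \<beta> \<in> carrier_vec (dim_col chi)" using B chi beta by simp
      show "R *\<^sub>v (B *\<^sub>v \<beta>) = 0\<^sub>v (dim_row R)" using RBv[OF beta] R by simp
      fix \<theta>' assume t: "\<theta>' \<in> carrier_vec (dim_col chi)" "R *\<^sub>v \<theta>' = 0\<^sub>v (dim_row R)"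
      then have t': "\<theta>' \<in> carrier_vec d" "R *\<^sub>v \<theta>' = 0\<^sub>v r" using chi R by auto
      have "ssr chi Yv \<theta>' = ssr chi Yv (B *\<^sub>v (Lb *\<^sub>v \<theta>'))" using repr[OF t'] by simp
      also have "\<dots> \<ge> ssr chi Yv (B *\<^sub>v \<beta>)" using ssr_dec[OF repr(2)[OF t']] self_scalar_nonneg by simp
      finally show "ssr chi Yv (B *\<^sub>v \<beta>) \<le> ssr chi Yv \<theta>'" .
    qed
    fix \<theta> assume P: "?P \<theta>"
    then have t: "\<theta> \<in> carrier_vec d" "R *\<^sub>v \<theta> = 0\<^sub>v r" using chi R by auto
    define \<beta>' where "\<beta>' = Lb *\<^sub>v \<theta>"
    have b': "\<beta>' \<in> carrier_vec k" and th: "\<theta> = B *\<^sub>v \<beta>'" using repr[OF t] unfolding \<beta>'_def by auto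
    have "ssr chi Yv \<theta> \<le> ssr chi Yv (B *\<^sub>v \<beta>)"
      using P B chi RBv[OF beta] R beta by auto
    then have "(X *\<^sub>v (\<beta> - \<beta>')) \<bullet> (X *\<^sub>v (\<beta> - \<beta>')) \<le> 0" using ssr_dec[OF b'] th by simp
    then have "(X *\<^sub>v (\<beta> - \<beta>')) \<bullet> (X *\<^sub>v (\<beta> - \<beta>')) = 0" using self_scalar_nonneg by (metis order.antisym)
    then have "X *\<^sub>v (\<beta> - \<beta>') = 0\<^sub>v n" using self_scalar_zero[of "X *\<^sub>v (\<beta> - \<beta>')" n] X beta b' by simp
    then have "\<beta> - \<beta>' = 0\<^sub>v k" using X_inj beta b' by simp
    then have z: "\<And>i. i < k \<Longrightarrow> (\<beta> - \<beta>') $ i = 0" by simp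
    have "\<beta>' = \<beta>"
    proof (rule eq_vecI)
      fix i assume "i < dim_vec \<beta>"
      then show "\<beta>' $ i = \<beta> $ i" using z[of i] beta b' by simp
    qed (use beta b' in simp)
    then show "\<theta> = B *\<^sub>v \<beta>" using th by simp
  qed
  show "rls chi Yv R = B *\<^sub>v ols (chi * B) Yv" using rls_eq unfolding \<beta>_def X_def .
  have HGW: "H * (G * W) = W" if "dim_row W = d" for W
  proof -
    have "H * (G * W) = H * G * W" using dims2 that by (simp add: assoc_dim)
    then show ?thesis using HG that by simp
  qed
  have GHW: "G * (H * W) = W" if "dim_row W = d" for W
  proof -
    have "G * (H * W) = G * H * W" using dims2 that by (simp add: assoc_dim)
    then show ?thesis using GH that by simp
  qed
  have cc: "transpose_mat chi * (chi * W) = H * W" if "dim_row W = d" for W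
    unfolding H_def using dims that by (simp add: assoc_dim)
  define RGR where "RGR = R * G * transpose_mat R"
  have RGR: "RGR \<in> carrier_mat r r" unfolding RGR_def using R G by simp
  define Mm where "Mm = chi * G * transpose_mat R"
  have Mm: "Mm \<in> carrier_mat n r" unfolding Mm_def using chi G R by simp
  have MmG: "transpose_mat Mm * Mm = RGR"
  proof -
    have "transpose_mat Mm * Mm = R * (G * (transpose_mat chi * (chi * (G * transpose_mat R))))"
      unfolding Mm_def using dims dims2 Gsym by (simp add: assoc_dim transpose_mult_dim)
    also have "\<dots> = R * (G * transpose_mat R)" using dims dims2 by (simp add: cc HGW)
    finally show ?thesis unfolding RGR_def using dims dims2 by (simp add: assoc_dim)
  qed
  have Mm_inj: "v = 0\<^sub>v r" if v: "v \<in> carrier_vec r" and z: "Mm *\<^sub>v v = 0\<^sub>v n" for v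
  proof -
    have Rv: "transpose_mat R *\<^sub>v v \<in> carrier_vec d" using R v by simp
    have "chi *\<^sub>v (G *\<^sub>v (transpose_mat R *\<^sub>v v)) = 0\<^sub>v n"
      using z unfolding Mm_def using dims dims2 v by (simp add: assoc_vec_dim)
    then have "G *\<^sub>v (transpose_mat R *\<^sub>v v) = 0\<^sub>v d" using chi_inj G Rv by simp
    then have "H *\<^sub>v (G *\<^sub>v (transpose_mat R *\<^sub>v v)) = 0\<^sub>v d" using H by simp
    moreover have "H *\<^sub>v (G *\<^sub>v (transpose_mat R *\<^sub>v v)) = transpose_mat R *\<^sub>v v"
      using assoc_mult_mat_vec[OF H G Rv, symmetric] HG Rv by simp
    ultimately have Rv0: "transpose_mat R *\<^sub>v v = 0\<^sub>v d" by simp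
    have "v = transpose_mat (R * Sr) *\<^sub>v v" using RS v by simp
    also have "\<dots> = (transpose_mat Sr * transpose_mat R) *\<^sub>v v" using dims by (simp add: transpose_mult_dim)
    also have "\<dots> = transpose_mat Sr *\<^sub>v (transpose_mat R *\<^sub>v v)" using Sr R v by simp
    finally show ?thesis using Rv0 Sr by simp
  qed
  have RGRdet: "det RGR \<noteq> 0" using gram_det[OF Mm Mm_inj] MmG by simp
  define Nn where "Nn = minv RGR"
  note Np = minv_props[OF RGR RGRdet, folded Nn_def]
  have Nn: "Nn \<in> carrier_mat r r" and RN: "RGR * Nn = 1\<^sub>m r" using Np by auto
  note dims3 = carrier_matD[OF Nn] carrier_matD[OF A]
  define Mr where "Mr = G * transpose_mat R * Nn"
  have Mr: "Mr \<in> carrier_mat d r" unfolding Mr_def using G R Nn by simp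
  have RMr: "R * Mr = 1\<^sub>m r"
  proof -
    have "R * Mr = RGR * Nn" unfolding Mr_def RGR_def using dims dims2 dims3 by (simp add: assoc_dim)
    then show ?thesis using RN by simp
  qed
  define P where "P = 1\<^sub>m d - Mr * R"
  have P: "P \<in> carrier_mat d d" unfolding P_def using Mr R by (intro minus_carrier_mat) simp
  have RP: "R * P = 0\<^sub>m r d"
  proof -
    have "R * P = R * 1\<^sub>m d - R * (Mr * R)" unfolding P_def
      by (rule mult_minus_distrib_mat[of _ r d]) (use R Mr in auto)
    also have "R * (Mr * R) = R" using RMr R Mr by (simp add: assoc_dim[symmetric] dims)
    finally show ?thesis using R by simp
  qed
  have BLP: "B * (Lb * P) = P" by (rule compl_mat[OF R B Lb P RP compl])
  have one0: "1\<^sub>m d = P + Mr * R"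
    unfolding P_def by (rule eq_matI) (use Mr R in auto)
  have one: "1\<^sub>m d = B * (Lb * P) + Mr * R" using one0 BLP by simp
  define T where "T = B * A * transpose_mat B * H"
  have T: "T \<in> carrier_mat d d" unfolding T_def using dims dims2 dims3 by (intro carrier_matI) simp_all
  have XtX': "XtX = transpose_mat B * (H * B)"
    unfolding XtX_def X_def H_def using dims by (simp add: assoc_dim transpose_mult_dim)
  have TB: "T * B = B"
  proof -
    have "T * B = B * (A * XtX)" unfolding T_def XtX' using dims dims2 dims3 by (simp add: assoc_dim)
    then show ?thesis using AX B by simp
  qed
  have TMr: "T * Mr = 0\<^sub>m d r"
  proof -
    have "T * Mr = B * (A * (transpose_mat B * (transpose_mat R * Nn)))"
      unfolding T_def Mr_def using dims dims2 dims3 by (simp add: assoc_dim HGW)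
    also have "transpose_mat B * (transpose_mat R * Nn) = transpose_mat (R * B) * Nn"
      using dims dims3 by (simp add: assoc_dim transpose_mult_dim)
    finally show ?thesis using RB dims dims3 by simp
  qed
  have PT: "P = T"
  proof -
    have "T = T * (B * (Lb * P) + Mr * R)" unfolding one[symmetric] using T by simp
    also have "\<dots> = T * (B * (Lb * P)) + T * (Mr * R)"
      by (rule mult_add_distrib_mat[of _ d d]) (use T B Lb P Mr R in auto)
    also have "T * (B * (Lb * P)) = T * B * (Lb * P)" using dims dims2 dims3 carrier_matD[OF T] carrier_matD[OF P] by (simp add: assoc_dim)
    also have "T * (Mr * R) = T * Mr * R" using dims dims2 dims3 carrier_matD[OF T] carrier_matD[OF Mr] by (simp add: assoc_dim)
    finally show ?thesis unfolding TB TMr BLP using R P by simp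
  qed
  have rls_e: "Yv - chi *\<^sub>v rls chi Yv R = Yv - X *\<^sub>v ols X Yv"
    unfolding rls_eq \<beta>_def X_def using chi B beta[unfolded \<beta>_def X_def] by simp
  define D where "D = mat_diag n (\<lambda>i. ((Yv - X *\<^sub>v ols X Yv) $ i)\<^sup>2)"
  have Dd: "dim_row D = n" "dim_col D = n" unfolding D_def mat_diag_def by simp_all
  have cov: "rls_cov_full chi Yv R = P * (G * transpose_mat chi * D * chi * G) * transpose_mat P"
    unfolding rls_cov_full_def Let_def H_def[symmetric] G_def[symmetric] RGR_def[symmetric] Nn_def[symmetric]
      Mr_def[symmetric] rls_e D_def using dims by (simp add: P_def)
  have ehw: "ehw X Yv = A * transpose_mat X * D * X * A"
    unfolding ehw_def Let_def A_def XtX_def D_def using X by simp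
  show "rls_cov_full chi Yv R = B * ehw (chi * B) Yv * transpose_mat B"
    unfolding cov ehw[unfolded X_def] PT T_def using dims dims2 dims3 Dd Hsym Asym
    by (simp add: assoc_dim transpose_mult_dim HGW GHW)
qed

lemma sum_single: "a < (k::nat) \<Longrightarrow> (\<Sum>c\<in>{0..<k}. (if c = a then x else 0) * f c) = x * (f a :: real)"
proof -
  assume a: "a < k"
  have "(\<Sum>c\<in>{0..<k}. (if c = a then x else 0) * f c) = (\<Sum>c\<in>{0..<k}. if c = a then x * f a else 0)"
    by (rule sum.cong) auto
  also have "\<dots> = (if a \<in> {0..<k} then x * f a else 0)" by (rule sum.delta) simp
  finally show ?thesis using a by simp
qed

lemma sum_single': "a < (k::nat) \<Longrightarrow> (\<Sum>c\<in>{0..<k}. f c * (if c = a then x else 0)) = f a * (x :: real)"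
proof -
  assume a: "a < k"
  have "(\<Sum>c\<in>{0..<k}. f c * (if c = a then x else 0)) = (\<Sum>c\<in>{0..<k}. if c = a then f a * x else 0)"
    by (rule sum.cong) auto
  also have "\<dots> = (if a \<in> {0..<k} then f a * x else 0)" by (rule sum.delta) simp
  finally show ?thesis using a by simp
qed

lemma extract_blocks:
  fixes B Cp \<Omega> :: "real mat" and \<beta> :: "real vec"
  assumes B: "B \<in> carrier_mat d k" and Qd: "Q \<le> d" and Cp: "Cp \<in> carrier_mat p Q"
    and beta: "\<beta> \<in> carrier_vec k" and Om: "\<Omega> \<in> carrier_mat k k" and pk: "p < k"
    and CB: "\<And>a c. a < p \<Longrightarrow> c < k \<Longrightarrow> (\<Sum>q<Q. Cp $$ (a, q) * B $$ (q, c)) = (if c = a + 1 then 2 else 0)"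
  shows "Cp *\<^sub>v vec Q (\<lambda>q. (B *\<^sub>v \<beta>) $ q) = vec p (\<lambda>a. 2 * \<beta> $ (a + 1))"
    "Cp * mat Q Q (\<lambda>(a, b). (B * \<Omega> * transpose_mat B) $$ (a, b)) * transpose_mat Cp
       = mat p p (\<lambda>(a, b). 4 * \<Omega> $$ (a + 1, b + 1))"
proof -
  define BY where "BY = mat Q k (\<lambda>(q, c). B $$ (q, c))"
  have BY: "BY \<in> carrier_mat Q k" unfolding BY_def by simp
  have rowBY: "row BY q = row B q" if "q < Q" for q
    unfolding BY_def using that Qd B by (intro eq_vecI) auto
  define E where "E = mat p k (\<lambda>(a, c). if c = a + 1 then 2 else (0::real))"
  have E: "E \<in> carrier_mat p k" unfolding E_def by simp
  have CBY: "Cp * BY = E"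
  proof (rule eq_matI)
    fix a c assume a: "a < dim_row E" and c: "c < dim_col E"
    have "(Cp * BY) $$ (a, c) = (\<Sum>q\<in>{0..<Q}. Cp $$ (a, q) * B $$ (q, c))"
      using a c Cp BY unfolding E_def BY_def by (simp add: scalar_prod_def)
    also have "\<dots> = E $$ (a, c)" using CB[of a c] a c unfolding E_def by (simp add: atLeast0LessThan)
    finally show "(Cp * BY) $$ (a, c) = E $$ (a, c)" .
  qed (use Cp BY E in auto)
  have v1: "vec Q (\<lambda>q. (B *\<^sub>v \<beta>) $ q) = BY *\<^sub>v \<beta>"
    by (rule eq_vecI) (use Qd B BY rowBY in auto)
  have "Cp *\<^sub>v (BY *\<^sub>v \<beta>) = E *\<^sub>v \<beta>" using CBY Cp BY beta by (metis assoc_mult_mat_vec)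
  also have "\<dots> = vec p (\<lambda>a. 2 * \<beta> $ (a + 1))"
  proof (rule eq_vecI)
    fix a assume "a < dim_vec (vec p (\<lambda>a. 2 * \<beta> $ (a + 1)))"
    then have a: "a < p" by simp
    have "(E *\<^sub>v \<beta>) $ a = (\<Sum>c\<in>{0..<k}. (if c = a + 1 then 2 else 0) * \<beta> $ c)"
      using a E beta unfolding E_def by (simp add: scalar_prod_def)
    also have "\<dots> = 2 * \<beta> $ (a + 1)" using a pk by (intro sum_single) simp
    finally show "(E *\<^sub>v \<beta>) $ a = vec p (\<lambda>a. 2 * \<beta> $ (a + 1)) $ a" using a by simp
  qed (use E in simp)
  finally show "Cp *\<^sub>v vec Q (\<lambda>q. (B *\<^sub>v \<beta>) $ q) = vec p (\<lambda>a. 2 * \<beta> $ (a + 1))" unfolding v1 .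
  have m1: "mat Q Q (\<lambda>(a, b). (B * \<Omega> * transpose_mat B) $$ (a, b)) = BY * \<Omega> * transpose_mat BY"
  proof (rule eq_matI)
    fix a b assume a: "a < dim_row (BY * \<Omega> * transpose_mat BY)" and b: "b < dim_col (BY * \<Omega> * transpose_mat BY)"
    then have a: "a < Q" and b: "b < Q" using BY by auto
    have r: "row (BY * \<Omega>) a = row (B * \<Omega>) a"
      by (rule eq_vecI) (use a b Qd B BY rowBY Om in auto)
    have "(BY * \<Omega> * transpose_mat BY) $$ (a, b) = row (BY * \<Omega>) a \<bullet> col (transpose_mat BY) b"
      by (rule index_mult_mat(1)) (use a b BY Om in auto)
    also have "col (transpose_mat BY) b = row BY b" using b BY by simp
    also have "row (BY * \<Omega>) a \<bullet> row BY b = row (B * \<Omega>) a \<bullet> col (transpose_mat B) b"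
      using r rowBY[OF b] b Qd B by simp
    also have "\<dots> = (B * \<Omega> * transpose_mat B) $$ (a, b)"
      by (rule index_mult_mat(1)[symmetric]) (use a b Qd B Om in auto)
    finally show "mat Q Q (\<lambda>(a, b). (B * \<Omega> * transpose_mat B) $$ (a, b)) $$ (a, b) = (BY * \<Omega> * transpose_mat BY) $$ (a, b)"
      using a b by simp
  qed (use BY Om in auto)
  have "Cp * (BY * \<Omega> * transpose_mat BY) * transpose_mat Cp = E * \<Omega> * transpose_mat E"
    using carrier_matD[OF Cp] carrier_matD[OF BY] carrier_matD[OF Om]
    unfolding CBY[symmetric] by (simp add: assoc_dim transpose_mult_dim)
  also have "E * \<Omega> = mat p k (\<lambda>(a, c). 2 * \<Omega> $$ (a + 1, c))"
  proof (rule eq_matI)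
    fix a c assume "a < dim_row (mat p k (\<lambda>(a, c). 2 * \<Omega> $$ (a + 1, c)))" "c < dim_col (mat p k (\<lambda>(a, c). 2 * \<Omega> $$ (a + 1, c)))"
    then have a: "a < p" and c: "c < k" by auto
    have "(E * \<Omega>) $$ (a, c) = (\<Sum>i\<in>{0..<k}. (if i = a + 1 then 2 else 0) * \<Omega> $$ (i, c))"
      using a c E Om unfolding E_def by (simp add: scalar_prod_def)
    also have "\<dots> = 2 * \<Omega> $$ (a + 1, c)" using a pk by (intro sum_single) simp
    finally show "(E * \<Omega>) $$ (a, c) = mat p k (\<lambda>(a, c). 2 * \<Omega> $$ (a + 1, c)) $$ (a, c)" using a c by simp
  qed (use E Om in auto)
  also have "mat p k (\<lambda>(a, c). 2 * \<Omega> $$ (a + 1, c)) * transpose_mat E = mat p p (\<lambda>(a, b). 4 * \<Omega> $$ (a + 1, b + 1))"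
  proof (rule eq_matI)
    fix a b assume "a < dim_row (mat p p (\<lambda>(a, b). 4 * \<Omega> $$ (a + 1, b + 1)))" "b < dim_col (mat p p (\<lambda>(a, b). 4 * \<Omega> $$ (a + 1, b + 1)))"
    then have a: "a < p" and b: "b < p" by auto
    have "(mat p k (\<lambda>(a, c). 2 * \<Omega> $$ (a + 1, c)) * transpose_mat E) $$ (a, b)
        = (\<Sum>i\<in>{0..<k}. (2 * \<Omega> $$ (a + 1, i)) * (if i = b + 1 then 2 else 0))"
      using a b E unfolding E_def by (simp add: scalar_prod_def)
    also have "\<dots> = 4 * \<Omega> $$ (a + 1, b + 1)" using b pk by (subst sum_single') simp_all
    finally show "(mat p k (\<lambda>(a, c). 2 * \<Omega> $$ (a + 1, c)) * transpose_mat E) $$ (a, b) = mat p p (\<lambda>(a, b). 4 * \<Omega> $$ (a + 1, b + 1)) $$ (a, b)"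
      using a b by simp
  qed (use E in auto)
  finally show "Cp * mat Q Q (\<lambda>(a, b). (B * \<Omega> * transpose_mat B) $$ (a, b)) * transpose_mat Cp
       = mat p p (\<lambda>(a, b). 4 * \<Omega> $$ (a + 1, b + 1))" unfolding m1 .
qed

lemma sum_split_add: "(\<Sum>t\<in>{0..<a+c}. f t) = (\<Sum>t\<in>{0..<a}. f t) + (\<Sum>u\<in>{0..<c}. f (a + u))"
  for f :: "nat \<Rightarrow> real"
proof -
  have "(\<Sum>t\<in>{0..<a+c}. f t) = (\<Sum>t\<in>{0..<a}. f t) + (\<Sum>t\<in>{a..<a+c}. f t)"
    by (rule sum.atLeastLessThan_concat[symmetric]) auto
  also have "(\<Sum>t\<in>{a..<a+c}. f t) = (\<Sum>u\<in>{0..<c}. f (u + a))"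
    using sum.shift_bounds_nat_ivl[of f 0 a c] by (simp add: add.commute)
  finally show ?thesis by (simp add: add.commute)
qed

lemma sum_div_mod: "(\<Sum>t\<in>{0..<b*J}. f t) = (\<Sum>s\<in>{0..<b}. \<Sum>u\<in>{0..<J}. f (s*J + u))"
  for f :: "nat \<Rightarrow> real"
proof -
  have "(\<Sum>t\<in>{0..<b*J}. f t) = (\<Sum>s<b. \<Sum>t\<in>{s*J..<s*J+J}. f t)"
    using sum.nat_group[of f J b] by (simp add: atLeast0LessThan)
  also have "\<dots> = (\<Sum>s<b. \<Sum>u\<in>{0..<J}. f (s*J + u))"
  proof (rule sum.cong)
    fix s show "(\<Sum>t\<in>{s*J..<s*J+J}. f t) = (\<Sum>u\<in>{0..<J}. f (s*J + u))"
      using sum.shift_bounds_nat_ivl[of f 0 "s*J" J] by (simp add: add.commute)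
  qed simp
  finally show ?thesis by (simp add: atLeast0LessThan)
qed

definition kronI :: "nat \<Rightarrow> real mat \<Rightarrow> real mat" where
  "kronI J M = mat (dim_row M * J) (dim_col M * J)
     (\<lambda>(i, j). if i mod J = j mod J then M $$ (i div J, j div J) else 0)"

lemma kronI_carrier[simp]: "kronI J M \<in> carrier_mat (dim_row M * J) (dim_col M * J)"
  unfolding kronI_def by simp

lemma kronI_dims[simp]: "dim_row (kronI J M) = dim_row M * J" "dim_col (kronI J M) = dim_col M * J"
  unfolding kronI_def by simp_all

lemma kronI_index[simp]: "i < dim_row M * J \<Longrightarrow> j < dim_col M * J \<Longrightarrow>
   kronI J M $$ (i, j) = (if i mod J = j mod J then M $$ (i div J, j div J) else 0)"
  unfolding kronI_def by simp

lemma div_lt[simp]: "i < b * J \<Longrightarrow> i div J < (b::nat)"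
  by (simp add: less_mult_imp_div_less)

lemma kronI_mult:
  assumes "dim_col M1 = dim_row M2"
  shows "kronI J M1 * kronI J M2 = kronI J (M1 * M2)"
proof (rule eq_matI)
  fix i j assume i: "i < dim_row (kronI J (M1 * M2))" and j: "j < dim_col (kronI J (M1 * M2))"
  then have i': "i < dim_row M1 * J" and j': "j < dim_col M2 * J" by auto
  have J: "J > 0" using i' by (cases J) auto
  let ?b = "dim_col M1"
  have "(kronI J M1 * kronI J M2) $$ (i, j) =
     (\<Sum>t\<in>{0..<?b*J}. kronI J M1 $$ (i, t) * kronI J M2 $$ (t, j))"
    using i' j' assms by (simp add: scalar_prod_def)
  also have "\<dots> = (\<Sum>s\<in>{0..<?b}. \<Sum>u\<in>{0..<J}. kronI J M1 $$ (i, s*J+u) * kronI J M2 $$ (s*J+u, j))"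
    by (rule sum_div_mod)
  also have "\<dots> = (\<Sum>s\<in>{0..<?b}. \<Sum>u\<in>{0..<J}.
      (if u = i mod J then (if i mod J = j mod J then M1 $$ (i div J, s) * M2 $$ (s, j div J) else 0) else 0))"
  proof (intro sum.cong refl)
    fix s u assume s: "s \<in> {0..<?b}" and u: "u \<in> {0..<J}"
    have "s*J + u < (s+1)*J" using u by simp
    also have "(s+1)*J \<le> ?b*J" using s by (intro mult_le_mono1) simp
    finally have "s*J+u < ?b*J" .
    moreover have "(s*J+u) mod J = u" "(s*J+u) div J = s" using u J by auto
    ultimately show "kronI J M1 $$ (i, s*J+u) * kronI J M2 $$ (s*J+u, j) =
      (if u = i mod J then (if i mod J = j mod J then M1 $$ (i div J, s) * M2 $$ (s, j div J) else 0) else 0)"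
      using i' j' assms by auto
  qed
  also have "\<dots> = (\<Sum>s\<in>{0..<?b}. (if i mod J = j mod J then M1 $$ (i div J, s) * M2 $$ (s, j div J) else 0))"
    using J by (simp add: sum.delta)
  also have "\<dots> = kronI J (M1 * M2) $$ (i, j)"
    using i' j' assms div_lt[OF i'] div_lt[OF j'] by (auto simp: scalar_prod_def)
  finally show "(kronI J M1 * kronI J M2) $$ (i, j) = kronI J (M1 * M2) $$ (i, j)" .
qed auto

lemma kronI_transpose: "transpose_mat (kronI J M) = kronI J (transpose_mat M)"
  by (rule eq_matI) auto

lemma kronI_one: "kronI J (1\<^sub>m n) = 1\<^sub>m (n * J)"
proof (rule eq_matI)
  fix i j assume "i < dim_row (1\<^sub>m (n * J))" "j < dim_col (1\<^sub>m (n * J))"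
  then have i: "i < n * J" and j: "j < n * J" by auto
  have "(i mod J = j mod J \<and> i div J = j div J) = (i = j)" by (metis div_mult_mod_eq)
  then show "kronI J (1\<^sub>m n) $$ (i, j) = 1\<^sub>m (n * J) $$ (i, j)"
    using i j div_lt[OF i] div_lt[OF j] by auto
qed auto

lemma kronI_zero: "kronI J (0\<^sub>m a b) = 0\<^sub>m (a * J) (b * J)"
  by (rule eq_matI) auto

lemma kronI_smult: "kronI J (c \<cdot>\<^sub>m M) = c \<cdot>\<^sub>m kronI J M"
  by (rule eq_matI) auto

lemma kronI_minus: "dim_row M1 = dim_row M2 \<Longrightarrow> dim_col M1 = dim_col M2 \<Longrightarrow>
    kronI J (M1 - M2) = kronI J M1 - kronI J M2"
  by (rule eq_matI) auto

definition bd :: "real mat \<Rightarrow> real mat \<Rightarrow> real mat" where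
  "bd A D = four_block_mat A (0\<^sub>m (dim_row A) (dim_col D)) (0\<^sub>m (dim_row D) (dim_col A)) D"

lemma bd_dims[simp]: "dim_row (bd A D) = dim_row A + dim_row D" "dim_col (bd A D) = dim_col A + dim_col D"
  unfolding bd_def by simp_all

lemma bd_carrier[simp]: "bd A D \<in> carrier_mat (dim_row A + dim_row D) (dim_col A + dim_col D)"
  unfolding bd_def by simp

lemma bd_index: "i < dim_row A + dim_row D \<Longrightarrow> j < dim_col A + dim_col D \<Longrightarrow>
  bd A D $$ (i, j) = (if i < dim_row A then (if j < dim_col A then A $$ (i, j) else 0)
     else (if j < dim_col A then 0 else D $$ (i - dim_row A, j - dim_col A)))"
  unfolding bd_def by simp

lemma bd_mult:
  assumes "dim_col A1 = dim_row A2" "dim_col D1 = dim_row D2"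
  shows "bd A1 D1 * bd A2 D2 = bd (A1 * A2) (D1 * D2)"
  unfolding bd_def
  by (subst mult_four_block_mat[of A1 "dim_row A1" "dim_col A1" _ "dim_col D1" _ "dim_row D1" D1
        A2 "dim_col A2" _ "dim_col D2" _ D2]) (use assms in auto)

lemma bd_transpose: "transpose_mat (bd A D) = bd (transpose_mat A) (transpose_mat D)"
  unfolding bd_def by (rule eq_matI) auto

lemma bd_one: "bd (1\<^sub>m a) (1\<^sub>m b) = 1\<^sub>m (a + b)"
  unfolding bd_def by simp

lemma bd_zero: "bd (0\<^sub>m a b) (0\<^sub>m c d) = 0\<^sub>m (a + c) (b + d)"
  unfolding bd_def by simp

lemma bd_smult: "c \<cdot>\<^sub>m bd A D = bd (c \<cdot>\<^sub>m A) (c \<cdot>\<^sub>m D)"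
  unfolding bd_def by (rule eq_matI) auto

lemma bd_vec:
  assumes "u \<in> carrier_vec (dim_col A)" "w \<in> carrier_vec (dim_col D)"
  shows "bd A D *\<^sub>v (u @\<^sub>v w) = (A *\<^sub>v u) @\<^sub>v (D *\<^sub>v w)"
  unfolding bd_def
  by (subst four_block_mat_mult_vec[of A "dim_row A" "dim_col A" _ "dim_col D" _ "dim_row D" D u w])
    (use assms in auto)

lemma sum_nth_distinct: "distinct xs \<Longrightarrow> (\<Sum>a\<in>{0..<length xs}. f (xs ! a)) = (\<Sum>S\<in>set xs. (f S :: real))"
proof -
  assume d: "distinct xs"
  have "(\<Sum>a\<in>{0..<length xs}. f (xs ! a)) = sum_list (map f xs)"
    using sum_list_sum_nth[of "map f xs"] by simp
  also have "\<dots> = (\<Sum>S\<in>set xs. f S)" using sum_list_distinct_conv_sum_set[OF d] .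
  finally show ?thesis .
qed

definition hgm :: "nat \<Rightarrow> nat set list \<Rightarrow> real mat" where
  "hgm K Ts = mat (2^K) (length Ts) (\<lambda>(q, a). hg K (Ts ! a) q)"

lemma hgm_carrier[simp]: "hgm K Ts \<in> carrier_mat (2^K) (length Ts)"
  unfolding hgm_def by simp

lemma hgm_dims[simp]: "dim_row (hgm K Ts) = 2^K" "dim_col (hgm K Ts) = length Ts"
  unfolding hgm_def by simp_all

lemma hgm_index[simp]: "q < 2^K \<Longrightarrow> a < length Ts \<Longrightarrow> hgm K Ts $$ (q, a) = hg K (Ts ! a) q"
  unfolding hgm_def by simp

lemma hgm_orth:
  assumes "\<forall>S\<in>set S1. S \<subseteq> {..<K}" "\<forall>S\<in>set S2. S \<subseteq> {..<K}"
  shows "transpose_mat (hgm K S1) * hgm K S2 =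
    mat (length S1) (length S2) (\<lambda>(a, b). if S1 ! a = S2 ! b then 2^K else 0)"
proof (rule eq_matI)
  fix a b assume "a < dim_row (mat (length S1) (length S2) (\<lambda>(a, b). if S1 ! a = S2 ! b then 2^K else (0::real)))"
    "b < dim_col (mat (length S1) (length S2) (\<lambda>(a, b). if S1 ! a = S2 ! b then 2^K else (0::real)))"
  then have a: "a < length S1" and b: "b < length S2" by auto
  have "(transpose_mat (hgm K S1) * hgm K S2) $$ (a, b) = (\<Sum>q\<in>{0..<2^K}. hg K (S1 ! a) q * hg K (S2 ! b) q)"
    using a b by (simp add: scalar_prod_def)
  also have "\<dots> = (if S1 ! a = S2 ! b then 2^K else 0)"
    using hg_orth[of "S1 ! a" K "S2 ! b"] assms a b by (simp add: atLeast0LessThan)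
  finally show "(transpose_mat (hgm K S1) * hgm K S2) $$ (a, b) =
      mat (length S1) (length S2) (\<lambda>(a, b). if S1 ! a = S2 ! b then 2^K else 0) $$ (a, b)"
    using a b by simp
qed auto

lemma hgm_orth_self:
  assumes "\<forall>S\<in>set S1. S \<subseteq> {..<K}" "distinct S1"
  shows "transpose_mat (hgm K S1) * hgm K S1 = (2^K) \<cdot>\<^sub>m 1\<^sub>m (length S1)"
  unfolding hgm_orth[OF assms(1) assms(1)]
  by (rule eq_matI) (use assms(2) in \<open>auto simp: nth_eq_iff_index_eq\<close>)

lemma hgm_orth_disj:
  assumes "\<forall>S\<in>set S1. S \<subseteq> {..<K}" "\<forall>S\<in>set S2. S \<subseteq> {..<K}" "set S1 \<inter> set S2 = {}"
  shows "transpose_mat (hgm K S1) * hgm K S2 = 0\<^sub>m (length S1) (length S2)"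
  unfolding hgm_orth[OF assms(1,2)]
  by (rule eq_matI) (use assms(3) in \<open>auto dest: nth_mem\<close>)

lemma hgm_compl:
  assumes "distinct (S1 @ S2)" "set S1 \<union> set S2 = Pow {..<K}"
  shows "hgm K S1 * transpose_mat (hgm K S1) + hgm K S2 * transpose_mat (hgm K S2) = (2^K) \<cdot>\<^sub>m 1\<^sub>m (2^K)"
proof (rule eq_matI)
  fix q q' assume "q < dim_row ((2^K) \<cdot>\<^sub>m 1\<^sub>m (2^K) :: real mat)" "q' < dim_col ((2^K) \<cdot>\<^sub>m 1\<^sub>m (2^K) :: real mat)"
  then have q: "q < 2^K" and q': "q' < 2^K" by auto
  have d1: "distinct S1" and d2: "distinct S2" and dj: "set S1 \<inter> set S2 = {}" using assms(1) by auto
  have "(hgm K S1 * transpose_mat (hgm K S1) + hgm K S2 * transpose_mat (hgm K S2)) $$ (q, q')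
     = (\<Sum>a\<in>{0..<length S1}. hg K (S1 ! a) q * hg K (S1 ! a) q') + (\<Sum>a\<in>{0..<length S2}. hg K (S2 ! a) q * hg K (S2 ! a) q')"
    using q q' by (simp add: scalar_prod_def)
  also have "\<dots> = (\<Sum>S\<in>set S1. hg K S q * hg K S q') + (\<Sum>S\<in>set S2. hg K S q * hg K S q')"
    using sum_nth_distinct[OF d1, of "\<lambda>S. hg K S q * hg K S q'"] sum_nth_distinct[OF d2, of "\<lambda>S. hg K S q * hg K S q'"]
    by simp
  also have "\<dots> = (\<Sum>S\<in>set S1 \<union> set S2. hg K S q * hg K S q')"
    by (rule sum.union_disjoint[symmetric]) (use dj in auto)
  also have "\<dots> = (if q = q' then 2^K else 0)" unfolding assms(2) by (rule hg_compl[OF q q'])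
  finally show "(hgm K S1 * transpose_mat (hgm K S1) + hgm K S2 * transpose_mat (hgm K S2)) $$ (q, q')
      = ((2^K) \<cdot>\<^sub>m 1\<^sub>m (2^K) :: real mat) $$ (q, q')" using q q' by simp
qed auto

lemma Cmat_eq: "Cmat K Fs = (1 / 2 ^ (K - 1)) \<cdot>\<^sub>m transpose_mat (hgm K Fs)"
  unfolding Cmat_def cvec_def hg_def by (rule eq_matI) (auto simp: hg_def)

lemma hg_unit:
  assumes "\<And>k. k < K \<Longrightarrow> Z i k = 1 \<or> Z i k = -1" "S \<subseteq> {..<K}"
  shows "hg K S (unit_level K Z i) = Zprod Z i S"
  unfolding hg_def Zprod_def using unit_level_props(2)[where K=K and Z=Z and i=i, OF assms(1)] assms(2)
  by (intro prod.cong) auto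

lemma tind_sum:
  assumes "unit_level K Z i < 2^K"
  shows "(\<Sum>c\<in>{0..<2^K}. tind K Z i c * f c) = (f (unit_level K Z i) :: real)"
proof -
  have "(\<Sum>c\<in>{0..<2^K}. tind K Z i c * f c) = (\<Sum>c\<in>{0..<2^K}. if c = unit_level K Z i then f (unit_level K Z i) else 0)"
    unfolding tind_def by (rule sum.cong) auto
  also have "\<dots> = f (unit_level K Z i)" using assms by (simp add: sum.delta)
  finally show ?thesis .
qed

definition BB :: "nat \<Rightarrow> nat \<Rightarrow> nat set list \<Rightarrow> nat set list \<Rightarrow> real mat" where
  "BB K J Ts Us = bd (hgm K Ts) (kronI J (hgm K Us))"

lemma BB_carrier: "BB K J Ts Us \<in> carrier_mat (2^K + 2^K * J) (length Ts + length Us * J)"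
  unfolding BB_def using bd_carrier[of "hgm K Ts" "kronI J (hgm K Us)"] by simp

lemma chiL_carrier: "chiL K N J Z x \<in> carrier_mat N (2^K + 2^K * J)"
  unfolding chiL_def by simp

lemma chiB:
  assumes Zpm: "\<And>i k. i < N \<Longrightarrow> k < K \<Longrightarrow> Z i k = 1 \<or> Z i k = -1"
    and Ts: "\<forall>S\<in>set Ts. S \<subseteq> {..<K}" and Us: "\<forall>S\<in>set Us. S \<subseteq> {..<K}"
  shows "chiL K N J Z x * BB K J Ts Us = mat N (length Ts + length Us * J) (\<lambda>(i, c).
     if c < length Ts then Zprod Z i (Ts ! c)
     else Zprod Z i (Us ! ((c - length Ts) div J)) * x i ((c - length Ts) mod J))"
  (is "_ = ?M")
proof (rule eq_matI)
  let ?Q = "2^K :: nat"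
  let ?lt = "length Ts"
  fix i c assume "i < dim_row ?M" "c < dim_col ?M"
  then have i: "i < N" and c: "c < ?lt + length Us * J" by auto
  have ul: "unit_level K Z i < ?Q" using unit_level_props(1)[where K=K and Z=Z and i=i] Zpm[OF i] by blast
  have hgu: "hg K S (unit_level K Z i) = Zprod Z i S" if "S \<subseteq> {..<K}" for S
    using hg_unit[where K=K and Z=Z and i=i, OF Zpm[OF i] that] by blast
  have BBi: "BB K J Ts Us $$ (t, c) = (if t < ?Q then (if c < ?lt then hgm K Ts $$ (t, c) else 0)
     else (if c < ?lt then 0 else kronI J (hgm K Us) $$ (t - ?Q, c - ?lt)))" if "t < ?Q + ?Q * J" for t
    unfolding BB_def using that c by (subst bd_index) auto
  have chii: "chiL K N J Z x $$ (i, t) = (if t < ?Q then tind K Z i t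
      else tind K Z i ((t - ?Q) div J) * x i ((t - ?Q) mod J))" if "t < ?Q + ?Q * J" for t
    unfolding chiL_def using i that by simp
  have "(chiL K N J Z x * BB K J Ts Us) $$ (i, c) =
      (\<Sum>t\<in>{0..<?Q + ?Q * J}. chiL K N J Z x $$ (i, t) * BB K J Ts Us $$ (t, c))"
    using i c chiL_carrier[of K N J Z x] BB_carrier[of K J Ts Us] by (simp add: scalar_prod_def)
  also have "\<dots> = (\<Sum>t\<in>{0..<?Q}. chiL K N J Z x $$ (i, t) * BB K J Ts Us $$ (t, c))
      + (\<Sum>u\<in>{0..<?Q * J}. chiL K N J Z x $$ (i, ?Q + u) * BB K J Ts Us $$ (?Q + u, c))"
    by (rule sum_split_add)
  also have "\<dots> = ?M $$ (i, c)"
  proof (cases "c < ?lt")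
    case True
    have "(\<Sum>t\<in>{0..<?Q}. chiL K N J Z x $$ (i, t) * BB K J Ts Us $$ (t, c))
        = (\<Sum>t\<in>{0..<?Q}. tind K Z i t * hg K (Ts ! c) t)"
      by (rule sum.cong) (use True BBi chii in auto)
    also have "\<dots> = Zprod Z i (Ts ! c)" using tind_sum[OF ul] hgu Ts True by simp
    finally have 1: "(\<Sum>t\<in>{0..<?Q}. chiL K N J Z x $$ (i, t) * BB K J Ts Us $$ (t, c)) = Zprod Z i (Ts ! c)" .
    have 2: "(\<Sum>u\<in>{0..<?Q * J}. chiL K N J Z x $$ (i, ?Q + u) * BB K J Ts Us $$ (?Q + u, c)) = 0"
      by (rule sum.neutral) (use True BBi in auto)
    show ?thesis using 1 2 True i c by simp
  next
    case False
    define d where "d = c - ?lt"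
    have d: "d < length Us * J" using c False unfolding d_def by auto
    then have J: "J > 0" by (cases J) auto
    have dd: "d div J < length Us" using d by simp
    have 1: "(\<Sum>t\<in>{0..<?Q}. chiL K N J Z x $$ (i, t) * BB K J Ts Us $$ (t, c)) = 0"
      by (rule sum.neutral) (use False BBi in auto)
    have "(\<Sum>u\<in>{0..<?Q * J}. chiL K N J Z x $$ (i, ?Q + u) * BB K J Ts Us $$ (?Q + u, c))
      = (\<Sum>s\<in>{0..<?Q}. \<Sum>v\<in>{0..<J}. chiL K N J Z x $$ (i, ?Q + (s*J+v)) * BB K J Ts Us $$ (?Q + (s*J+v), c))"
      by (rule sum_div_mod)
    also have "\<dots> = (\<Sum>s\<in>{0..<?Q}. \<Sum>v\<in>{0..<J}. if v = d mod J then tind K Z i s * hg K (Us ! (d div J)) s * x i (d mod J) else 0)"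
    proof (intro sum.cong refl)
      fix s v assume s: "s \<in> {0..<?Q}" and v: "v \<in> {0..<J}"
      have "s*J + v < (s+1)*J" using v by simp
      also have "(s+1)*J \<le> ?Q*J" using s by (intro mult_le_mono1) simp
      finally have sv: "s*J+v < ?Q*J" .
      have m: "(s*J+v) mod J = v" "(s*J+v) div J = s" using v J by auto
      have "chiL K N J Z x $$ (i, ?Q + (s*J+v)) = tind K Z i s * x i v"
        using chii[of "?Q + (s*J+v)"] sv m by simp
      moreover have "BB K J Ts Us $$ (?Q + (s*J+v), c) = (if v = d mod J then hg K (Us ! (d div J)) s else 0)"
        using BBi[of "?Q + (s*J+v)"] sv m False d dd s unfolding d_def by auto
      ultimately show "chiL K N J Z x $$ (i, ?Q + (s*J+v)) * BB K J Ts Us $$ (?Q + (s*J+v), c) =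
          (if v = d mod J then tind K Z i s * hg K (Us ! (d div J)) s * x i (d mod J) else 0)"
        by auto
    qed
    also have "\<dots> = (\<Sum>s\<in>{0..<?Q}. tind K Z i s * (hg K (Us ! (d div J)) s * x i (d mod J)))"
      using J by (simp add: sum.delta mult.assoc)
    also have "\<dots> = Zprod Z i (Us ! (d div J)) * x i (d mod J)"
      using tind_sum[OF ul, of "\<lambda>s. hg K (Us ! (d div J)) s * x i (d mod J)"] hgu Us dd by simp
    finally show ?thesis using 1 False i c unfolding d_def by simp
  qed
  finally show "(chiL K N J Z x * BB K J Ts Us) $$ (i, c) = ?M $$ (i, c)" .
qed (use chiL_carrier[of K N J Z x] BB_carrier[of K J Ts Us] in auto)

lemma smult_mult_l: "dim_col A = dim_row B \<Longrightarrow> (a \<cdot>\<^sub>m A) * B = a \<cdot>\<^sub>m (A * (B::real mat))"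
  by (rule eq_matI) (auto simp: scalar_prod_def sum_distrib_left mult.assoc)
lemma smult_mult_r: "dim_col A = dim_row B \<Longrightarrow> A * (a \<cdot>\<^sub>m B) = a \<cdot>\<^sub>m (A * (B::real mat))"
  by (rule eq_matI) (auto simp: scalar_prod_def sum_distrib_left mult.left_commute)
lemma transpose_smult: "transpose_mat (a \<cdot>\<^sub>m A) = a \<cdot>\<^sub>m transpose_mat (A::real mat)"
  by (rule eq_matI) auto
lemma smult_mat_vec: "dim_col A = dim_vec v \<Longrightarrow> (a \<cdot>\<^sub>m A) *\<^sub>v v = a \<cdot>\<^sub>v (A *\<^sub>v (v::real vec))"
  by (rule eq_vecI) (auto simp: scalar_prod_def sum_distrib_left mult.assoc)
lemma smult_smult_mat: "a \<cdot>\<^sub>m (b \<cdot>\<^sub>m A) = (a * b) \<cdot>\<^sub>m (A::real mat)"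
  by (rule eq_matI) auto

lemma one_smult_mat'[simp]: "(1::real) \<cdot>\<^sub>m A = A"
  by (rule eq_matI) auto

lemma minv_carrier: "A \<in> carrier_mat n n \<Longrightarrow> minv A \<in> carrier_mat n n"
proof -
  assume A: "A \<in> carrier_mat n n"
  show ?thesis
  proof (cases "mat_inverse A")
    case None
    then show ?thesis using A by (simp add: minv_def)
  next
    case (Some B)
    then show ?thesis using mat_inverse(2)[OF A Some] by (simp add: minv_def)
  qed
qed

lemma effects_sub: "S \<in> effects K \<Longrightarrow> S \<subseteq> {..<K}"
  unfolding effects_def by auto

lemma Pow_effects: "Pow {..<K} = insert {} (effects K)"
  unfolding effects_def by auto

lemma case_generic:
  fixes K N J g :: nat and Y :: "nat \<Rightarrow> real" and x Z :: "nat \<Rightarrow> nat \<Rightarrow> real"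
    and Fp Fm Us :: "nat set list" and \<Gamma> \<Gamma>s :: "real mat"
  assumes Z_pm1: "\<And>i k. i < N \<Longrightarrow> k < K \<Longrightarrow> Z i k = 1 \<or> Z i k = -1"
    and Fp_distinct: "distinct Fp" and Fm_distinct: "distinct Fm"
    and Fp_sub: "set Fp \<subseteq> effects K"
    and Fm_def: "set Fm = effects K - set Fp"
    and Fm_ne: "Fm \<noteq> []"
    and chi_nonsing: "invertible_mat (transpose_mat (chiL K N J Z x) * chiL K N J Z x)"
    and Us_sub: "\<forall>S\<in>set Us. S \<subseteq> {..<K}" and Us_dist: "distinct Us"
    and Gam: "\<Gamma> \<in> carrier_mat g (2^K * J)" and Gams: "\<Gamma>s \<in> carrier_mat (2^K * J) g"
    and GG: "\<Gamma> * \<Gamma>s = 1\<^sub>m g"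
    and GB: "\<Gamma> * kronI J (hgm K Us) = 0\<^sub>m g (length Us * J)"
    and Gcompl: "\<And>\<theta>. \<theta> \<in> carrier_vec (2^K * J) \<Longrightarrow> \<Gamma> *\<^sub>v \<theta> = 0\<^sub>v g \<Longrightarrow>
        kronI J (hgm K Us) *\<^sub>v (transpose_mat (kronI J (hgm K Us)) *\<^sub>v \<theta>) = (2^K) \<cdot>\<^sub>v \<theta>"
  shows "tau_u (length Fp) (chiL K N J Z x * BB K J ({} # Fp) Us) (vec N Y)
           = Cmat K Fp *\<^sub>v Yhat_r (2^K) (chiL K N J Z x) (vec N Y) (bd (Cmat K Fm) \<Gamma>)
       \<and> Omega_u (length Fp) (chiL K N J Z x * BB K J ({} # Fp) Us) (vec N Y)
           = Cmat K Fp * Psi_r (2^K) (chiL K N J Z x) (vec N Y) (bd (Cmat K Fm) \<Gamma>) * transpose_mat (Cmat K Fp)"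
proof -
  define Q where "Q = (2::nat)^K"
  define Ts where "Ts = {} # Fp"
  define p where "p = length Fp"
  define m where "m = length Fm"
  define lt where "lt = length Ts"
  define k where "k = lt + length Us * J"
  define c0 where "c0 = (1::real) / 2 ^ (K - 1)"
  define chi where "chi = chiL K N J Z x"
  define Yv where "Yv = vec N Y"
  define A where "A = hgm K Fm"
  define Cm where "Cm = Cmat K Fm"
  define Cp where "Cp = Cmat K Fp"
  define U where "U = kronI J (hgm K Us)"
  define R where "R = bd Cm \<Gamma>"
  define B where "B = BB K J Ts Us"
  have K: "K \<ge> 1"
  proof -
    obtain S where "S \<in> set Fm" using Fm_ne by (cases Fm) auto
    then have "S \<in> effects K" using Fm_def by auto
    then show ?thesis unfolding effects_def by (cases K) auto
  qed
  have c0Q: "c0 * real Q = 2" unfolding c0_def Q_def using K by (cases K) auto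
  have c0nz: "c0 \<noteq> 0" unfolding c0_def by simp
  have Qpos: "real Q > 0" unfolding Q_def by simp
  have Ts_sub: "\<forall>S\<in>set Ts. S \<subseteq> {..<K}" unfolding Ts_def using Fp_sub effects_sub by auto
  have Fm_sub: "\<forall>S\<in>set Fm. S \<subseteq> {..<K}" using Fm_def effects_sub by auto
  have emp: "{} \<notin> effects K" unfolding effects_def by auto
  have Ts_dist: "distinct Ts" unfolding Ts_def using Fp_distinct Fp_sub emp by auto
  have TF_dist: "distinct (Ts @ Fm)" unfolding Ts_def using Fp_distinct Fm_distinct Fp_sub Fm_def emp by auto
  have TF_disj: "set Ts \<inter> set Fm = {}" using TF_dist by auto
  have TF_un: "set Ts \<union> set Fm = Pow {..<K}" unfolding Ts_def Pow_effects using Fp_sub Fm_def by auto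
  have Cm_eq: "Cm = c0 \<cdot>\<^sub>m transpose_mat A" unfolding Cm_def A_def c0_def by (rule Cmat_eq)
  have Cm: "Cm \<in> carrier_mat m Q" unfolding Cm_eq A_def m_def Q_def by simp
  have Cp: "Cp \<in> carrier_mat p Q" unfolding Cp_def p_def Q_def Cmat_def by simp
  have A: "A \<in> carrier_mat Q m" unfolding A_def m_def Q_def by simp
  have U: "U \<in> carrier_mat (Q * J) (length Us * J)" unfolding U_def Q_def using kronI_carrier[of J "hgm K Us"] by simp
  have R: "R \<in> carrier_mat (m + g) (Q + Q * J)" unfolding R_def using bd_carrier[of Cm \<Gamma>] Cm Gam
    unfolding Q_def by simp
  have B: "B \<in> carrier_mat (Q + Q * J) k" unfolding B_def k_def lt_def Q_def by (rule BB_carrier)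
  have chi: "chi \<in> carrier_mat N (Q + Q * J)" unfolding chi_def Q_def by (rule chiL_carrier)
  have Hdet: "det (transpose_mat chi * chi) \<noteq> 0"
    using invertible_det[OF chi_nonsing[folded chi_def], of "Q + Q * J"] chi by simp
  define Sr where "Sr = bd ((1 / (c0 * c0 * real Q)) \<cdot>\<^sub>m transpose_mat Cm) \<Gamma>s"
  have Gam': "\<Gamma> \<in> carrier_mat g (Q * J)" and Gams': "\<Gamma>s \<in> carrier_mat (Q * J) g"
    using Gam Gams unfolding Q_def by auto
  note dA = carrier_matD[OF A] and dCm = carrier_matD[OF Cm] and dG = carrier_matD[OF Gam'] and dGs = carrier_matD[OF Gams']
    and dU = carrier_matD[OF U]
  have Sr: "Sr \<in> carrier_mat (Q + Q * J) (m + g)" unfolding Sr_def using dCm dGs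
    by (intro carrier_matI) simp_all
  have AtA: "transpose_mat A * A = real Q \<cdot>\<^sub>m 1\<^sub>m m"
    using hgm_orth_self[OF Fm_sub Fm_distinct] unfolding A_def m_def Q_def by simp
  have CC: "Cm * transpose_mat Cm = (c0 * c0 * real Q) \<cdot>\<^sub>m 1\<^sub>m m"
    unfolding Cm_eq using dA AtA by (simp add: transpose_smult smult_mult_l smult_mult_r smult_smult_mat mult.assoc)
  have RS: "R * Sr = 1\<^sub>m (m + g)"
  proof -
    have "R * Sr = bd (Cm * ((1 / (c0 * c0 * real Q)) \<cdot>\<^sub>m transpose_mat Cm)) (\<Gamma> * \<Gamma>s)"
      unfolding R_def Sr_def using dCm dG dGs by (subst bd_mult) simp_all
    also have "Cm * ((1 / (c0 * c0 * real Q)) \<cdot>\<^sub>m transpose_mat Cm) = 1\<^sub>m m"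
      using dCm CC c0nz Qpos by (simp add: smult_mult_r smult_smult_mat)
    finally show ?thesis using GG bd_one by simp
  qed
  define Lb where "Lb = (1 / real Q) \<cdot>\<^sub>m transpose_mat B"
  have Lb: "Lb \<in> carrier_mat k (Q + Q * J)" unfolding Lb_def using B by simp
  have dT: "dim_row (hgm K Ts) = Q" "dim_col (hgm K Ts) = lt" unfolding Q_def lt_def by simp_all
  have BtB: "transpose_mat B * B = real Q \<cdot>\<^sub>m 1\<^sub>m k"
  proof -
    have "transpose_mat B * B = bd (transpose_mat (hgm K Ts) * hgm K Ts) (transpose_mat U * U)"
      unfolding B_def BB_def U_def[symmetric] bd_transpose using dT dU by (subst bd_mult) simp_all
    also have "transpose_mat (hgm K Ts) * hgm K Ts = real Q \<cdot>\<^sub>m 1\<^sub>m lt"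
      using hgm_orth_self[OF Ts_sub Ts_dist] unfolding Q_def lt_def by simp
    also have "transpose_mat U * U = real Q \<cdot>\<^sub>m 1\<^sub>m (length Us * J)"
      unfolding U_def kronI_transpose using hgm_orth_self[OF Us_sub Us_dist]
      by (simp add: kronI_mult kronI_smult kronI_one Q_def)
    finally show ?thesis unfolding k_def using bd_smult[of "real Q" "1\<^sub>m lt" "1\<^sub>m (length Us * J)"] bd_one
      by simp
  qed
  have LB: "Lb * B = 1\<^sub>m k"
    unfolding Lb_def using carrier_matD[OF B] BtB Qpos by (simp add: smult_mult_l smult_smult_mat)
  have RB: "R * B = 0\<^sub>m (m + g) k"
  proof -
    have "R * B = bd (Cm * hgm K Ts) (\<Gamma> * U)"
      unfolding R_def B_def BB_def U_def[symmetric] using dT dCm dG dU by (subst bd_mult) simp_all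
    also have "Cm * hgm K Ts = 0\<^sub>m m lt"
    proof -
      have "transpose_mat A * hgm K Ts = 0\<^sub>m m lt"
        using hgm_orth_disj[OF Fm_sub Ts_sub] TF_disj unfolding A_def m_def lt_def by auto
      then show ?thesis unfolding Cm_eq using dA dT by (simp add: smult_mult_l)
    qed
    also have "\<Gamma> * U = 0\<^sub>m g (length Us * J)" using GB unfolding U_def .
    finally show ?thesis unfolding k_def using bd_zero by simp
  qed
  have compl: "B *\<^sub>v (Lb *\<^sub>v \<theta>) = \<theta>" if th: "\<theta> \<in> carrier_vec (Q + Q * J)" and Rth: "R *\<^sub>v \<theta> = 0\<^sub>v (m + g)" for \<theta>
  proof -
    define \<theta>1 where "\<theta>1 = vec_first \<theta> Q"
    define \<theta>2 where "\<theta>2 = vec_last \<theta> (Q * J)"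
    have t1: "\<theta>1 \<in> carrier_vec Q" and t2: "\<theta>2 \<in> carrier_vec (Q * J)"
      unfolding \<theta>1_def \<theta>2_def by auto
    have th_eq: "\<theta> = \<theta>1 @\<^sub>v \<theta>2" unfolding \<theta>1_def \<theta>2_def using th by simp
    have "R *\<^sub>v \<theta> = (Cm *\<^sub>v \<theta>1) @\<^sub>v (\<Gamma> *\<^sub>v \<theta>2)"
      unfolding R_def th_eq by (rule bd_vec) (use t1 t2 dCm dG in auto)
    moreover have "0\<^sub>v (m + g) = 0\<^sub>v m @\<^sub>v (0\<^sub>v g :: real vec)" by (rule eq_vecI) auto
    ultimately have "(Cm *\<^sub>v \<theta>1) @\<^sub>v (\<Gamma> *\<^sub>v \<theta>2) = 0\<^sub>v m @\<^sub>v 0\<^sub>v g" using Rth by simp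
    then have C1: "Cm *\<^sub>v \<theta>1 = 0\<^sub>v m" and G2: "\<Gamma> *\<^sub>v \<theta>2 = 0\<^sub>v g"
      using append_vec_eq[of "Cm *\<^sub>v \<theta>1" m "0\<^sub>v m"] Cm t1 by auto
    have At1: "transpose_mat A *\<^sub>v \<theta>1 = 0\<^sub>v m"
    proof -
      define w where "w = transpose_mat A *\<^sub>v \<theta>1"
      have w: "dim_vec w = m" unfolding w_def using dA by simp
      have h: "c0 \<cdot>\<^sub>v w = 0\<^sub>v m"
        using C1 unfolding Cm_eq w_def using dA t1 by (simp add: smult_mat_vec)
      have "w = 0\<^sub>v m"
      proof (rule eq_vecI)
        fix i assume i: "i < dim_vec (0\<^sub>v m :: real vec)"
        have "(c0 \<cdot>\<^sub>v w) $ i = 0" using h i by simp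
        then show "w $ i = 0\<^sub>v m $ i" using i c0nz w by simp
      qed (use w in simp)
      then show ?thesis unfolding w_def .
    qed
    have Y1: "hgm K Ts *\<^sub>v (transpose_mat (hgm K Ts) *\<^sub>v \<theta>1) = real Q \<cdot>\<^sub>v \<theta>1"
    proof -
      have HC: "hgm K Ts * transpose_mat (hgm K Ts) + A * transpose_mat A = real Q \<cdot>\<^sub>m 1\<^sub>m Q"
        using hgm_compl[OF TF_dist TF_un] unfolding A_def Q_def by simp
      have "(hgm K Ts * transpose_mat (hgm K Ts) + A * transpose_mat A) *\<^sub>v \<theta>1
          = (hgm K Ts * transpose_mat (hgm K Ts)) *\<^sub>v \<theta>1 + (A * transpose_mat A) *\<^sub>v \<theta>1"
        by (rule add_mult_distrib_mat_vec[of _ Q Q]) (use dT dA t1 in \<open>auto intro!: carrier_matI\<close>)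
      also have "(A * transpose_mat A) *\<^sub>v \<theta>1 = 0\<^sub>v Q"
        using At1 dA t1 A by (simp add: assoc_vec_dim)
      also have "(hgm K Ts * transpose_mat (hgm K Ts)) *\<^sub>v \<theta>1 = hgm K Ts *\<^sub>v (transpose_mat (hgm K Ts) *\<^sub>v \<theta>1)"
        using dT t1 by (simp add: assoc_vec_dim)
      finally have "hgm K Ts *\<^sub>v (transpose_mat (hgm K Ts) *\<^sub>v \<theta>1) + 0\<^sub>v Q = real Q \<cdot>\<^sub>v \<theta>1"
        unfolding HC using t1 by (simp add: smult_mat_vec)
      moreover have "hgm K Ts *\<^sub>v (transpose_mat (hgm K Ts) *\<^sub>v \<theta>1) \<in> carrier_vec Q"
        using dT by (intro carrier_vecI) simp
      ultimately show ?thesis by simp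
    qed
    have Y2: "U *\<^sub>v (transpose_mat U *\<^sub>v \<theta>2) = real Q \<cdot>\<^sub>v \<theta>2"
      using Gcompl[of \<theta>2] t2 G2 unfolding U_def Q_def by simp
    have BLb: "B * Lb = (1 / real Q) \<cdot>\<^sub>m bd (hgm K Ts * transpose_mat (hgm K Ts)) (U * transpose_mat U)"
    proof -
      have "B * transpose_mat B = bd (hgm K Ts * transpose_mat (hgm K Ts)) (U * transpose_mat U)"
        unfolding B_def BB_def U_def[symmetric] bd_transpose using dT dU by (subst bd_mult) simp_all
      then show ?thesis unfolding Lb_def using carrier_matD[OF B] by (simp add: smult_mult_r)
    qed
    have "B *\<^sub>v (Lb *\<^sub>v \<theta>) = (B * Lb) *\<^sub>v \<theta>" using B Lb th by simp
    also have "\<dots> = (1 / real Q) \<cdot>\<^sub>v (bd (hgm K Ts * transpose_mat (hgm K Ts)) (U * transpose_mat U) *\<^sub>v (\<theta>1 @\<^sub>v \<theta>2))"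
      unfolding BLb th_eq using dT dU t1 t2 by (subst smult_mat_vec) auto
    also have "bd (hgm K Ts * transpose_mat (hgm K Ts)) (U * transpose_mat U) *\<^sub>v (\<theta>1 @\<^sub>v \<theta>2)
        = ((hgm K Ts * transpose_mat (hgm K Ts)) *\<^sub>v \<theta>1) @\<^sub>v ((U * transpose_mat U) *\<^sub>v \<theta>2)"
      by (rule bd_vec) (use dT dU t1 t2 in auto)
    also have "(hgm K Ts * transpose_mat (hgm K Ts)) *\<^sub>v \<theta>1 = real Q \<cdot>\<^sub>v \<theta>1"
      using Y1 dT t1 by (simp add: assoc_vec_dim)
    also have "(U * transpose_mat U) *\<^sub>v \<theta>2 = real Q \<cdot>\<^sub>v \<theta>2"
      using Y2 dU t2 by (simp add: assoc_vec_dim)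
    also have "(1 / real Q) \<cdot>\<^sub>v ((real Q \<cdot>\<^sub>v \<theta>1) @\<^sub>v (real Q \<cdot>\<^sub>v \<theta>2)) = \<theta>1 @\<^sub>v \<theta>2"
      using Qpos t1 t2 by (intro eq_vecI) auto
    finally show ?thesis using th_eq by simp
  qed
  have Yv: "Yv \<in> carrier_vec N" unfolding Yv_def by simp
  note core = rls_core[OF chi Hdet R Sr RS B Lb LB RB compl Yv]
  define X where "X = chi * B"
  have X: "X \<in> carrier_mat N k" unfolding X_def using chi B by simp
  have beta: "ols X Yv \<in> carrier_vec k"
    unfolding ols_def using minv_carrier[of "transpose_mat X * X" k] X Yv by simp
  have Om: "ehw X Yv \<in> carrier_mat k k"
    unfolding ehw_def Let_def using minv_carrier[of "transpose_mat X * X" k] X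
    by (intro carrier_matI) auto
  have pk: "p < k" unfolding p_def k_def lt_def Ts_def by simp
  have CB: "(\<Sum>q<Q. Cp $$ (a, q) * B $$ (q, c)) = (if c = a + 1 then 2 else 0)" if a: "a < p" and c: "c < k" for a c
  proof -
    have Cpi: "Cp $$ (a, q) = c0 * hg K (Fp ! a) q" if "q < Q" for q
      unfolding Cp_def Cmat_eq c0_def[symmetric] using a that unfolding p_def Q_def by simp
    have Bi: "B $$ (q, c) = (if c < lt then hg K (Ts ! c) q else 0)" if "q < Q" for q
      unfolding B_def BB_def using that c dT unfolding k_def lt_def Q_def by (subst bd_index) auto
    have Fpa: "Fp ! a \<in> set Fp" using a unfolding p_def by simp
    show ?thesis
    proof (cases "c < lt")
      case True
      have "(\<Sum>q<Q. Cp $$ (a, q) * B $$ (q, c)) = c0 * (\<Sum>q<2^K. hg K (Fp ! a) q * hg K (Ts ! c) q)"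
        unfolding sum_distrib_left Q_def[symmetric] by (rule sum.cong) (use Cpi Bi True in auto)
      also have "\<dots> = c0 * (if Fp ! a = Ts ! c then real Q else 0)"
      proof -
        have s1: "Fp ! a \<subseteq> {..<K}" using Fpa Fp_sub effects_sub by auto
        have s2: "Ts ! c \<subseteq> {..<K}" using Ts_sub True unfolding lt_def by auto
        show ?thesis using hg_orth[OF s1 s2] unfolding Q_def by simp
      qed
      also have "(Fp ! a = Ts ! c) = (c = a + 1)"
      proof (cases c)
        case 0
        then show ?thesis using Fpa Fp_sub emp unfolding Ts_def by auto
      next
        case (Suc c')
        then have "c' < p" using True unfolding lt_def Ts_def p_def by simp
        then show ?thesis using Suc Fp_distinct a unfolding Ts_def p_def by (auto simp: nth_eq_iff_index_eq)
      qed
      finally show ?thesis using c0Q by simp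
    next
      case False
      have "(\<Sum>q<Q. Cp $$ (a, q) * B $$ (q, c)) = 0" by (rule sum.neutral) (use Bi False in auto)
      moreover have "c \<noteq> a + 1" using False a unfolding lt_def Ts_def p_def by auto
      ultimately show ?thesis by simp
    qed
  qed
  note ex = extract_blocks[OF B _ Cp beta Om pk CB]
  have r1: "rls chi Yv R = B *\<^sub>v ols X Yv" using core(1) unfolding X_def .
  have r2: "rls_cov_full chi Yv R = B * ehw X Yv * transpose_mat B" using core(2) unfolding X_def .
  have tau: "tau_u p X Yv = Cp *\<^sub>v Yhat_r Q chi Yv R"
    unfolding tau_u_def Yhat_r_def r1 using ex(1) by simp
  have Om: "Omega_u p X Yv = Cp * Psi_r Q chi Yv R * transpose_mat Cp"
    unfolding Omega_u_def Psi_r_def r2 using ex(2) by simp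
  show ?thesis using tau Om unfolding X_def B_def chi_def Yv_def Ts_def p_def Cp_def Q_def R_def Cm_def by simp
qed

lemma Zprod_empty[simp]: "Zprod Z i {} = 1" unfolding Zprod_def by simp

lemma XN_eq:
  assumes "\<And>i k. i < N \<Longrightarrow> k < K \<Longrightarrow> Z i k = 1 \<or> Z i k = -1" "set Fp \<subseteq> effects K"
  shows "X_N N Z Fp = chiL K N J Z x * BB K J ({} # Fp) []"
proof -
  have Ts: "\<forall>S\<in>set ({} # Fp). S \<subseteq> {..<K}" using assms(2) effects_sub by auto
  have E: "chiL K N J Z x * BB K J ({} # Fp) [] = mat N (length ({} # Fp) + length ([]::nat set list) * J) (\<lambda>(i, c).
     if c < length ({} # Fp) then Zprod Z i (({} # Fp) ! c)
     else Zprod Z i (([]::nat set list) ! ((c - length ({} # Fp)) div J)) * x i ((c - length ({} # Fp)) mod J))"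
    by (rule chiB) (use assms Ts in auto)
  show ?thesis unfolding E X_N_def by (rule eq_matI) (auto simp: nth_Cons')
qed

lemma RN_eq:
  assumes "Cm \<in> carrier_mat m Q"
  shows "R_N Q J Cm = bd Cm (1\<^sub>m (Q * J))"
  unfolding R_N_def using assms by (intro eq_matI) (auto simp: bd_index)

lemma caseN:
  fixes K N J :: nat and Y :: "nat \<Rightarrow> real" and x Z :: "nat \<Rightarrow> nat \<Rightarrow> real"
    and Fp Fm :: "nat set list"
  assumes Z_pm1: "\<And>i k. i < N \<Longrightarrow> k < K \<Longrightarrow> Z i k = 1 \<or> Z i k = -1"
    and Fp_distinct: "distinct Fp" and Fm_distinct: "distinct Fm"
    and Fp_sub: "set Fp \<subseteq> effects K"
    and Fm_def: "set Fm = effects K - set Fp"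
    and Fm_ne: "Fm \<noteq> []"
    and chi_nonsing: "invertible_mat (transpose_mat (chiL K N J Z x) * chiL K N J Z x)"
  shows "tau_u (length Fp) (X_N N Z Fp) (vec N Y)
           = Cmat K Fp *\<^sub>v Yhat_r (2^K) (chiL K N J Z x) (vec N Y) (R_N (2^K) J (Cmat K Fm))
       \<and> Omega_u (length Fp) (X_N N Z Fp) (vec N Y)
           = Cmat K Fp * Psi_r (2^K) (chiL K N J Z x) (vec N Y) (R_N (2^K) J (Cmat K Fm)) * transpose_mat (Cmat K Fp)"
proof -
  let ?g = "2^K * J"
  have Cm: "Cmat K Fm \<in> carrier_mat (length Fm) (2^K)" unfolding Cmat_def by simp
  have GB: "1\<^sub>m ?g * kronI J (hgm K []) = 0\<^sub>m ?g (length [] * J)"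
    by (rule eq_matI) auto
  have Gc: "kronI J (hgm K []) *\<^sub>v (transpose_mat (kronI J (hgm K [])) *\<^sub>v \<theta>) = (2^K) \<cdot>\<^sub>v \<theta>"
    if "\<theta> \<in> carrier_vec ?g" "1\<^sub>m ?g *\<^sub>v \<theta> = 0\<^sub>v ?g" for \<theta>
  proof -
    have "\<theta> = 0\<^sub>v ?g" using that by simp
    then show ?thesis by (intro eq_vecI) (auto simp: scalar_prod_def)
  qed
  note G = case_generic[OF Z_pm1 Fp_distinct Fm_distinct Fp_sub Fm_def Fm_ne chi_nonsing, of "[]" "1\<^sub>m ?g" ?g "1\<^sub>m ?g" Y]
  have "tau_u (length Fp) (chiL K N J Z x * BB K J ({} # Fp) []) (vec N Y)
           = Cmat K Fp *\<^sub>v Yhat_r (2^K) (chiL K N J Z x) (vec N Y) (bd (Cmat K Fm) (1\<^sub>m ?g))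
       \<and> Omega_u (length Fp) (chiL K N J Z x * BB K J ({} # Fp) []) (vec N Y)
           = Cmat K Fp * Psi_r (2^K) (chiL K N J Z x) (vec N Y) (bd (Cmat K Fm) (1\<^sub>m ?g)) * transpose_mat (Cmat K Fp)"
    by (rule G) (use GB Gc in auto)
  moreover have XN: "X_N N Z Fp = chiL K N J Z x * BB K J ({} # Fp) []"
    by (rule XN_eq) (use Z_pm1 Fp_sub in auto)
  moreover have RN: "R_N (2^K) J (Cmat K Fm) = bd (Cmat K Fm) (1\<^sub>m (2^K * J))"
    by (rule RN_eq[OF Cm])
  ultimately show ?thesis by simp
qed

lemma CC_lemma:
  assumes "\<forall>S\<in>set Fm. S \<subseteq> {..<K}" "distinct Fm"
  shows "Cmat K Fm * transpose_mat (Cmat K Fm) = ((1 / 2 ^ (K - 1)) * (1 / 2 ^ (K - 1)) * 2^K) \<cdot>\<^sub>m 1\<^sub>m (length Fm)"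
proof -
  have AtA: "transpose_mat (hgm K Fm) * hgm K Fm = (2^K) \<cdot>\<^sub>m 1\<^sub>m (length Fm)"
    using hgm_orth_self[OF assms] by simp
  show ?thesis unfolding Cmat_eq using AtA
    by (simp add: transpose_smult smult_mult_l smult_mult_r smult_smult_mat mult.assoc)
qed

lemma Cm_T0:
  assumes "\<forall>S\<in>set Fm. S \<subseteq> {..<K}" "\<forall>S\<in>set Ts. S \<subseteq> {..<K}" "set Fm \<inter> set Ts = {}"
  shows "Cmat K Fm * hgm K Ts = 0\<^sub>m (length Fm) (length Ts)"
proof -
  have "transpose_mat (hgm K Fm) * hgm K Ts = 0\<^sub>m (length Fm) (length Ts)"
    using hgm_orth_disj[OF assms] .
  then show ?thesis unfolding Cmat_eq by (simp add: smult_mult_l)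
qed

lemma RL_eq:
  assumes "Cm \<in> carrier_mat m Q"
  shows "R_L Q J Cm = bd Cm (kronI J Cm)"
  unfolding R_L_def using assms by (intro eq_matI) (auto simp: bd_index Let_def)

lemma XL_eq:
  assumes "\<And>i k. i < N \<Longrightarrow> k < K \<Longrightarrow> Z i k = 1 \<or> Z i k = -1" "set Fp \<subseteq> effects K"
  shows "X_L N J Z x Fp = chiL K N J Z x * BB K J ({} # Fp) ({} # Fp)"
proof -
  have Ts: "\<forall>S\<in>set ({} # Fp). S \<subseteq> {..<K}" using assms(2) effects_sub by auto
  have E: "chiL K N J Z x * BB K J ({} # Fp) ({} # Fp) = mat N (length ({} # Fp) + length ({} # Fp) * J) (\<lambda>(i, c).
     if c < length ({} # Fp) then Zprod Z i (({} # Fp) ! c)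
     else Zprod Z i (({} # Fp) ! ((c - length ({} # Fp)) div J)) * x i ((c - length ({} # Fp)) mod J))"
    by (rule chiB) (use assms Ts in auto)
  show ?thesis unfolding E X_L_def
  proof (rule eq_matI)
    fix i c assume "i < dim_row (mat N (length ({} # Fp) + length ({} # Fp) * J) (\<lambda>(i, c).
     if c < length ({} # Fp) then Zprod Z i (({} # Fp) ! c)
     else Zprod Z i (({} # Fp) ! ((c - length ({} # Fp)) div J)) * x i ((c - length ({} # Fp)) mod J)))"
      "c < dim_col (mat N (length ({} # Fp) + length ({} # Fp) * J) (\<lambda>(i, c).
     if c < length ({} # Fp) then Zprod Z i (({} # Fp) ! c)
     else Zprod Z i (({} # Fp) ! ((c - length ({} # Fp)) div J)) * x i ((c - length ({} # Fp)) mod J)))"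
    then have i: "i < N" and c: "c < 1 + length Fp + J + length Fp * J" by auto
    show "mat N (1 + length Fp + J + length Fp * J)
          (\<lambda>(i, c). if c = 0 then 1 else if c \<le> length Fp then Zprod Z i (Fp ! (c - 1))
             else if c < 1 + length Fp + J then x i (c - 1 - length Fp)
             else let d = c - 1 - length Fp - J in Zprod Z i (Fp ! (d div J)) * x i (d mod J)) $$ (i, c) =
        mat N (length ({} # Fp) + length ({} # Fp) * J) (\<lambda>(i, c).
          if c < length ({} # Fp) then Zprod Z i (({} # Fp) ! c)
          else Zprod Z i (({} # Fp) ! ((c - length ({} # Fp)) div J)) * x i ((c - length ({} # Fp)) mod J)) $$ (i, c)"
    proof (cases "c < 1 + length Fp")
      case True
      then show ?thesis using i c by (auto simp: nth_Cons')
    next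
      case False
      define d where "d = c - 1 - length Fp"
      have J: "J > 0" using c False by (cases J) auto
      show ?thesis
      proof (cases "d < J")
        case True
        then show ?thesis using i c False J unfolding d_def by auto
      next
        case False2: False
        obtain e where de: "d = e + J" using False2 by (metis add.commute le_add_diff_inverse not_less)
        have e: "d div J = Suc ((d - J) div J)" "d mod J = (d - J) mod J" unfolding de using J by simp_all
        have "c - Suc (length Fp) = d" "c - Suc (length Fp) - J = d - J" unfolding d_def by auto
        then show ?thesis using i c False False2 J e unfolding d_def by (auto simp: Let_def)
      qed
    qed
  qed auto
qed


lemma compl_minus:
  assumes "distinct (S1 @ S2)" "set S1 \<union> set S2 = Pow {..<K}"
  shows "hgm K S1 * transpose_mat (hgm K S1) = (2^K) \<cdot>\<^sub>m 1\<^sub>m (2^K) - hgm K S2 * transpose_mat (hgm K S2)"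
proof (rule eq_matI)
  fix i j assume "i < dim_row ((2^K) \<cdot>\<^sub>m 1\<^sub>m (2^K) - hgm K S2 * transpose_mat (hgm K S2) :: real mat)"
    "j < dim_col ((2^K) \<cdot>\<^sub>m 1\<^sub>m (2^K) - hgm K S2 * transpose_mat (hgm K S2) :: real mat)"
  then have i: "i < 2^K" and j: "j < 2^K" by auto
  have "(hgm K S1 * transpose_mat (hgm K S1) + hgm K S2 * transpose_mat (hgm K S2)) $$ (i, j) = ((2^K) \<cdot>\<^sub>m 1\<^sub>m (2^K) :: real mat) $$ (i, j)"
    using hgm_compl[OF assms] by simp
  then show "(hgm K S1 * transpose_mat (hgm K S1)) $$ (i, j) = ((2^K) \<cdot>\<^sub>m 1\<^sub>m (2^K) - hgm K S2 * transpose_mat (hgm K S2)) $$ (i, j)"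
    using i j by simp
qed auto

lemma caseL:
  fixes K N J :: nat and Y :: "nat \<Rightarrow> real" and x Z :: "nat \<Rightarrow> nat \<Rightarrow> real"
    and Fp Fm :: "nat set list"
  assumes Z_pm1: "\<And>i k. i < N \<Longrightarrow> k < K \<Longrightarrow> Z i k = 1 \<or> Z i k = -1"
    and Fp_distinct: "distinct Fp" and Fm_distinct: "distinct Fm"
    and Fp_sub: "set Fp \<subseteq> effects K"
    and Fm_def: "set Fm = effects K - set Fp"
    and Fm_ne: "Fm \<noteq> []"
    and chi_nonsing: "invertible_mat (transpose_mat (chiL K N J Z x) * chiL K N J Z x)"
  shows "tau_u (length Fp) (X_L N J Z x Fp) (vec N Y)
           = Cmat K Fp *\<^sub>v Yhat_r (2^K) (chiL K N J Z x) (vec N Y) (R_L (2^K) J (Cmat K Fm))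
       \<and> Omega_u (length Fp) (X_L N J Z x Fp) (vec N Y)
           = Cmat K Fp * Psi_r (2^K) (chiL K N J Z x) (vec N Y) (R_L (2^K) J (Cmat K Fm)) * transpose_mat (Cmat K Fp)"
proof -
  define Q where "Q = (2::nat)^K"
  define m where "m = length Fm"
  define Ts where "Ts = {} # Fp"
  define c0 where "c0 = (1::real) / 2 ^ (K - 1)"
  define Cm where "Cm = Cmat K Fm"
  define A where "A = hgm K Fm"
  let ?g = "m * J"
  have Cm: "Cm \<in> carrier_mat m Q" unfolding Cm_def Cmat_def m_def Q_def by simp
  have A: "A \<in> carrier_mat Q m" unfolding A_def m_def Q_def by simp
  have emp: "{} \<notin> effects K" unfolding effects_def by auto
  have Ts_sub: "\<forall>S\<in>set Ts. S \<subseteq> {..<K}" unfolding Ts_def using Fp_sub effects_sub by auto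
  have Fm_sub: "\<forall>S\<in>set Fm. S \<subseteq> {..<K}" using Fm_def effects_sub by auto
  have Ts_dist: "distinct Ts" unfolding Ts_def using Fp_distinct Fp_sub emp by auto
  have TF_dist: "distinct (Ts @ Fm)" unfolding Ts_def using Fp_distinct Fm_distinct Fp_sub Fm_def emp by auto
  have TF_un: "set Ts \<union> set Fm = Pow {..<K}" unfolding Ts_def Pow_effects using Fp_sub Fm_def by auto
  have K: "K \<ge> 1"
  proof -
    obtain S where "S \<in> set Fm" using Fm_ne by (cases Fm) auto
    then have "S \<in> effects K" using Fm_def by auto
    then show ?thesis unfolding effects_def by (cases K) auto
  qed
  have c0nz: "c0 \<noteq> 0" unfolding c0_def by simp
  have Qpos: "real Q > 0" unfolding Q_def by simp
  have s0: "c0 * c0 * real Q \<noteq> 0" using c0nz Qpos by simp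
  define Gs where "Gs = (1 / (c0 * c0 * real Q)) \<cdot>\<^sub>m kronI J (transpose_mat Cm)"
  have Gam: "kronI J Cm \<in> carrier_mat ?g (2^K * J)" using kronI_carrier[of J Cm] Cm unfolding Q_def by simp
  have Gams: "Gs \<in> carrier_mat (2^K * J) ?g" unfolding Gs_def using Cm unfolding Q_def
    by (intro carrier_matI) simp_all
  have CC: "Cm * transpose_mat Cm = (c0 * c0 * real Q) \<cdot>\<^sub>m 1\<^sub>m m"
    using CC_lemma[OF Fm_sub Fm_distinct] unfolding Cm_def c0_def m_def Q_def by simp
  have GG: "kronI J Cm * Gs = 1\<^sub>m ?g"
    unfolding Gs_def using Cm CC s0
    by (simp add: smult_mult_r kronI_mult kronI_smult kronI_one smult_smult_mat)
  have GB: "kronI J Cm * kronI J (hgm K Ts) = 0\<^sub>m ?g (length Ts * J)"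
  proof -
    have "Cm * hgm K Ts = 0\<^sub>m m (length Ts)"
      unfolding Cm_def m_def by (rule Cm_T0[OF Fm_sub Ts_sub]) (use TF_dist in auto)
    then show ?thesis using Cm by (simp add: kronI_mult kronI_zero Q_def)
  qed
  have Gc: "kronI J (hgm K Ts) *\<^sub>v (transpose_mat (kronI J (hgm K Ts)) *\<^sub>v \<theta>) = (2^K) \<cdot>\<^sub>v \<theta>"
    if th: "\<theta> \<in> carrier_vec (2^K * J)" and z: "kronI J Cm *\<^sub>v \<theta> = 0\<^sub>v ?g" for \<theta>
  proof -
    define kA where "kA = kronI J A"
    have kA: "kA \<in> carrier_mat (Q * J) ?g" unfolding kA_def using kronI_carrier[of J A] A by simp
    have th': "\<theta> \<in> carrier_vec (Q * J)" using th unfolding Q_def .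
    have kCm: "kronI J Cm = c0 \<cdot>\<^sub>m transpose_mat kA"
      unfolding kA_def Cm_def Cmat_eq kronI_smult kronI_transpose A_def c0_def ..
    have w0: "transpose_mat kA *\<^sub>v \<theta> = 0\<^sub>v ?g"
    proof -
      define w where "w = transpose_mat kA *\<^sub>v \<theta>"
      have w: "dim_vec w = ?g" unfolding w_def using kA by simp
      have h: "c0 \<cdot>\<^sub>v w = 0\<^sub>v ?g"
        using z unfolding kCm w_def using kA th' by (simp add: smult_mat_vec)
      have "w = 0\<^sub>v ?g"
      proof (rule eq_vecI)
        fix i assume i: "i < dim_vec (0\<^sub>v ?g :: real vec)"
        have "(c0 \<cdot>\<^sub>v w) $ i = 0" using h i by simp
        then show "w $ i = 0\<^sub>v ?g $ i" using i c0nz w by simp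
      qed (use w in simp)
      then show ?thesis unfolding w_def .
    qed
    have UU: "kronI J (hgm K Ts) * transpose_mat (kronI J (hgm K Ts)) = real Q \<cdot>\<^sub>m 1\<^sub>m (Q * J) - kA * transpose_mat kA"
    proof -
      have "kronI J (hgm K Ts) * transpose_mat (kronI J (hgm K Ts)) = kronI J (hgm K Ts * transpose_mat (hgm K Ts))"
        unfolding kronI_transpose by (simp add: kronI_mult)
      also have "hgm K Ts * transpose_mat (hgm K Ts) = (2^K) \<cdot>\<^sub>m 1\<^sub>m (2^K) - A * transpose_mat A"
        unfolding A_def by (rule compl_minus[OF TF_dist TF_un])
      also have "kronI J \<dots> = real Q \<cdot>\<^sub>m 1\<^sub>m (Q * J) - kA * transpose_mat kA"
        unfolding kA_def using A
        by (simp add: kronI_minus kronI_smult kronI_one kronI_mult kronI_transpose Q_def)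
      finally show ?thesis .
    qed
    have "kronI J (hgm K Ts) *\<^sub>v (transpose_mat (kronI J (hgm K Ts)) *\<^sub>v \<theta>)
        = (kronI J (hgm K Ts) * transpose_mat (kronI J (hgm K Ts))) *\<^sub>v \<theta>"
      using th by (simp add: assoc_vec_dim)
    also have "\<dots> = (real Q \<cdot>\<^sub>m 1\<^sub>m (Q * J)) *\<^sub>v \<theta> - (kA * transpose_mat kA) *\<^sub>v \<theta>"
      unfolding UU by (rule minus_mult_distrib_mat_vec[of _ "Q * J" "Q * J"]) (use kA th' in auto)
    also have "(kA * transpose_mat kA) *\<^sub>v \<theta> = 0\<^sub>v (Q * J)"
      using w0 kA th' by (simp add: assoc_vec_dim)
    also have "(real Q \<cdot>\<^sub>m 1\<^sub>m (Q * J)) *\<^sub>v \<theta> = real Q \<cdot>\<^sub>v \<theta>"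
      using th' by (simp add: smult_mat_vec)
    also have "real Q \<cdot>\<^sub>v \<theta> - 0\<^sub>v (Q * J) = (2^K) \<cdot>\<^sub>v \<theta>"
    proof (rule eq_vecI)
      fix i assume "i < dim_vec ((2::real)^K \<cdot>\<^sub>v \<theta>)"
      then show "(real Q \<cdot>\<^sub>v \<theta> - 0\<^sub>v (Q * J)) $ i = ((2::real)^K \<cdot>\<^sub>v \<theta>) $ i"
        using th' unfolding Q_def by simp
    qed (use th' in simp)
    finally show ?thesis .
  qed
  have Ts_sub': "\<forall>S\<in>set Ts. S \<subseteq> {..<K}" by (rule Ts_sub)
  note G = case_generic[OF Z_pm1 Fp_distinct Fm_distinct Fp_sub Fm_def Fm_ne chi_nonsing Ts_sub' Ts_dist Gam Gams GG
      GB Gc, unfolded Ts_def, of Y]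
  moreover have XL: "X_L N J Z x Fp = chiL K N J Z x * BB K J ({} # Fp) ({} # Fp)"
    by (rule XL_eq) (use Z_pm1 Fp_sub in auto)
  moreover have RL: "R_L (2^K) J Cm = bd Cm (kronI J Cm)"
    by (rule RL_eq) (use Cm Q_def in auto)
  ultimately show ?thesis unfolding Cm_def by metis
qed

lemma two_point:
  assumes "r + J < (n::nat)" "0 < J"
  shows "(\<Sum>c\<in>{0..<n}. (if c = r then 1 else if c = r + J then -1 else 0) * f c) = f r - (f (r + J) :: real)"
proof -
  have "(\<Sum>c\<in>{0..<n}. (if c = r then 1 else if c = r + J then -1 else 0) * f c)
      = (\<Sum>c\<in>{0..<n}. (if c = r then f r else 0) + (if c = r + J then - f (r + J) else 0))"
    by (rule sum.cong) (use assms in auto)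
  also have "\<dots> = f r - f (r + J)" using assms by (simp add: sum.distrib sum.delta)
  finally show ?thesis .
qed

definition GamF :: "nat \<Rightarrow> nat \<Rightarrow> real mat" where
  "GamF Q J = mat ((Q - 1) * J) (Q * J) (\<lambda>(r, c). if c = r then 1 else if c = r + J then -1 else 0)"

definition GamFs :: "nat \<Rightarrow> nat \<Rightarrow> real mat" where
  "GamFs Q J = mat (Q * J) ((Q - 1) * J) (\<lambda>(c, r). if c mod J = r mod J \<and> c div J \<le> r div J then 1 else 0)"

lemma RF_eq:
  assumes "Cm \<in> carrier_mat m Q"
  shows "R_F Q J Cm = bd Cm (GamF Q J)"
  unfolding R_F_def GamF_def using assms by (intro eq_matI) (auto simp: bd_index Let_def)

lemma rowJ: "(r::nat) < (Q - 1) * J \<Longrightarrow> r + J < Q * J"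
proof -
  assume h: "r < (Q - 1) * J"
  then obtain Q' where "Q = Suc Q'" by (cases Q) auto
  with h show ?thesis by simp
qed

lemma rowJ': "(r::nat) < (Q - 1) * J \<Longrightarrow> r < Q * J"
  using rowJ[of r Q J] by simp

lemma GamF_mult:
  assumes "dim_row M = Q * J" "r < (Q - 1) * J" "j < dim_col M"
  shows "(GamF Q J * M) $$ (r, j) = M $$ (r, j) - M $$ (r + J, j)"
proof -
  have J: "J > 0" using assms(2) by (cases J) auto
  have "(GamF Q J * M) $$ (r, j) = (\<Sum>c\<in>{0..<Q * J}. (if c = r then 1 else if c = r + J then -1 else 0) * M $$ (c, j))"
    using assms unfolding GamF_def by (simp add: scalar_prod_def)
  also have "\<dots> = M $$ (r, j) - M $$ (r + J, j)" by (rule two_point) (use rowJ[OF assms(2)] J in auto)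
  finally show ?thesis .
qed

lemma GamF_GG: "GamF Q J * GamFs Q J = 1\<^sub>m ((Q - 1) * J)"
proof (rule eq_matI)
  fix r r' assume "r < dim_row (1\<^sub>m ((Q - 1) * J) :: real mat)" "r' < dim_col (1\<^sub>m ((Q - 1) * J) :: real mat)"
  then have r: "r < (Q - 1) * J" and r': "r' < (Q - 1) * J" by auto
  have J: "J > 0" using r by (cases J) auto
  have "(GamF Q J * GamFs Q J) $$ (r, r') = GamFs Q J $$ (r, r') - GamFs Q J $$ (r + J, r')"
    by (rule GamF_mult) (use r r' in \<open>auto simp: GamFs_def\<close>)
  also have "\<dots> = (if r mod J = r' mod J \<and> r div J = r' div J then 1 else 0)"
    using rowJ[OF r] rowJ'[OF r] r' J unfolding GamFs_def by auto
  also have "\<dots> = 1\<^sub>m ((Q - 1) * J) $$ (r, r')"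
    using r r' by (auto, metis div_mult_mod_eq)
  finally show "(GamF Q J * GamFs Q J) $$ (r, r') = 1\<^sub>m ((Q - 1) * J) $$ (r, r')" .
qed (auto simp: GamF_def GamFs_def)

lemma hgm_empty_index: "q < 2^K \<Longrightarrow> hgm K [{}] $$ (q, 0) = 1"
  by (simp add: hg_def)

lemma UF_index:
  assumes "c < 2^K * J" "j < J"
  shows "kronI J (hgm K [{}]) $$ (c, j) = (if c mod J = j then 1 else 0)"
  using assms by (simp add: hg_def)

lemma GamF_GB: "GamF (2^K) J * kronI J (hgm K [{}]) = 0\<^sub>m ((2^K - 1) * J) (length [{}] * J)"
proof (rule eq_matI)
  fix r j assume "r < dim_row (0\<^sub>m ((2^K - 1) * J) (length [{}] * J) :: real mat)"
    "j < dim_col (0\<^sub>m ((2^K - 1) * J) (length [{}] * J) :: real mat)"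
  then have r: "r < (2^K - 1) * J" and j: "j < J" by auto
  have J: "J > 0" using j by simp
  have "(GamF (2^K) J * kronI J (hgm K [{}])) $$ (r, j) = kronI J (hgm K [{}]) $$ (r, j) - kronI J (hgm K [{}]) $$ (r + J, j)"
    by (rule GamF_mult) (use r j in auto)
  also have "\<dots> = 0" using UF_index[OF rowJ'[OF r] j] UF_index[OF rowJ[OF r] j] J by simp
  finally show "(GamF (2^K) J * kronI J (hgm K [{}])) $$ (r, j) = 0\<^sub>m ((2^K - 1) * J) (length [{}] * J) $$ (r, j)"
    using r j by simp
qed (auto simp: GamF_def)


lemma GamF_compl:
  assumes th: "\<theta> \<in> carrier_vec (2^K * J)" and z: "GamF (2^K) J *\<^sub>v \<theta> = 0\<^sub>v ((2^K - 1) * J)"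
  shows "kronI J (hgm K [{}]) *\<^sub>v (transpose_mat (kronI J (hgm K [{}])) *\<^sub>v \<theta>) = (2^K) \<cdot>\<^sub>v \<theta>"
proof -
  define Q where "Q = (2::nat)^K"
  have Qpos: "Q > 0" unfolding Q_def by simp
  define U where "U = kronI J (hgm K [{}])"
  have U: "U \<in> carrier_mat (Q * J) J" unfolding U_def Q_def using kronI_carrier[of J "hgm K [{}]"] by simp
  have th': "\<theta> \<in> carrier_vec (Q * J)" using th unfolding Q_def .
  have Ui: "U $$ (c, j) = (if c mod J = j then 1 else 0)" if "c < Q * J" "j < J" for c j
    unfolding U_def using UF_index[of c K J j] that unfolding Q_def by simp
  have step1: "\<theta> $ r = \<theta> $ (r + J)" if r: "r < (Q - 1) * J" for r
  proof -
    have J: "J > 0" using r by (cases J) auto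
    have "(GamF Q J *\<^sub>v \<theta>) $ r = 0" using z r unfolding Q_def by simp
    moreover have "(GamF Q J *\<^sub>v \<theta>) $ r = (\<Sum>c\<in>{0..<Q * J}. (if c = r then 1 else if c = r + J then -1 else 0) * \<theta> $ c)"
      using r th' unfolding GamF_def by (simp add: scalar_prod_def)
    moreover have "\<dots> = \<theta> $ r - \<theta> $ (r + J)" by (rule two_point) (use rowJ[OF r] J in auto)
    ultimately show ?thesis by simp
  qed
  have step2: "\<theta> $ (s * J + v) = \<theta> $ v" if "s < Q" "v < J" for s v
    using that
  proof (induction s)
    case 0 then show ?case by simp
  next
    case (Suc s)
    have "s * J + v < (Q - 1) * J"
    proof -
      have "s * J + v < (s + 1) * J" using Suc.prems by simp
      also have "(s + 1) * J \<le> (Q - 1) * J" using Suc.prems by (intro mult_le_mono1) simp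
      finally show ?thesis .
    qed
    then have "\<theta> $ (s * J + v) = \<theta> $ (s * J + v + J)" by (rule step1)
    then show ?case using Suc by (simp add: algebra_simps)
  qed
  define w where "w = transpose_mat U *\<^sub>v \<theta>"
  have w: "w $ j = real Q * \<theta> $ j" if j: "j < J" for j
  proof -
    have "w $ j = (\<Sum>c\<in>{0..<Q * J}. U $$ (c, j) * \<theta> $ c)"
      unfolding w_def using j U th' by (simp add: scalar_prod_def)
    also have "\<dots> = (\<Sum>s\<in>{0..<Q}. \<Sum>v\<in>{0..<J}. U $$ (s * J + v, j) * \<theta> $ (s * J + v))"
      by (rule sum_div_mod)
    also have "\<dots> = (\<Sum>s\<in>{0..<Q}. \<Sum>v\<in>{0..<J}. if v = j then \<theta> $ j else 0)"
    proof (intro sum.cong refl)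
      fix s v assume s: "s \<in> {0..<Q}" and v: "v \<in> {0..<J}"
      have "s * J + v < (s + 1) * J" using v by simp
      also have "(s + 1) * J \<le> Q * J" using s by (intro mult_le_mono1) simp
      finally have sv: "s * J + v < Q * J" .
      have "(s * J + v) mod J = v" using v by simp
      then show "U $$ (s * J + v, j) * \<theta> $ (s * J + v) = (if v = j then \<theta> $ j else 0)"
        using Ui[OF sv j] step2[of s v] s v by auto
    qed
    also have "\<dots> = real Q * \<theta> $ j" using j by (simp add: sum.delta)
    finally show ?thesis .
  qed
  have wd: "dim_vec w = J" unfolding w_def using U by simp
  have "U *\<^sub>v w = real Q \<cdot>\<^sub>v \<theta>"
  proof (rule eq_vecI)
    fix c assume "c < dim_vec (real Q \<cdot>\<^sub>v \<theta>)"
    then have c: "c < Q * J" using th' by simp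
    then have J: "J > 0" by (cases J) auto
    have cm: "c mod J < J" using J by simp
    have "(U *\<^sub>v w) $ c = (\<Sum>j\<in>{0..<J}. U $$ (c, j) * w $ j)"
      using c U wd by (simp add: scalar_prod_def)
    also have "\<dots> = (\<Sum>j\<in>{0..<J}. if j = c mod J then real Q * \<theta> $ (c mod J) else 0)"
      by (rule sum.cong) (use Ui c w in auto)
    also have "\<dots> = real Q * \<theta> $ (c mod J)" using cm by (simp add: sum.delta)
    also have "\<theta> $ (c mod J) = \<theta> $ c"
      using step2[of "c div J" "c mod J"] c cm by (simp add: less_mult_imp_div_less)
    finally show "(U *\<^sub>v w) $ c = (real Q \<cdot>\<^sub>v \<theta>) $ c" using c th' by simp
  qed (use U th' in simp)
  then show ?thesis unfolding U_def w_def Q_def by simp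
qed


lemma XF_eq:
  assumes "\<And>i k. i < N \<Longrightarrow> k < K \<Longrightarrow> Z i k = 1 \<or> Z i k = -1" "set Fp \<subseteq> effects K"
  shows "X_F N J Z x Fp = chiL K N J Z x * BB K J ({} # Fp) [{}]"
proof -
  have Ts: "\<forall>S\<in>set ({} # Fp). S \<subseteq> {..<K}" using assms(2) effects_sub by auto
  have E: "chiL K N J Z x * BB K J ({} # Fp) [{}] = mat N (length ({} # Fp) + length [{}::nat set] * J) (\<lambda>(i, c).
     if c < length ({} # Fp) then Zprod Z i (({} # Fp) ! c)
     else Zprod Z i ([{}::nat set] ! ((c - length ({} # Fp)) div J)) * x i ((c - length ({} # Fp)) mod J))"
    by (rule chiB) (use assms Ts in auto)
  show ?thesis unfolding E X_F_def
  proof (rule eq_matI)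
    fix i c assume a: "i < dim_row (mat N (length ({} # Fp) + length [{}::nat set] * J) (\<lambda>(i, c).
     if c < length ({} # Fp) then Zprod Z i (({} # Fp) ! c)
     else Zprod Z i ([{}::nat set] ! ((c - length ({} # Fp)) div J)) * x i ((c - length ({} # Fp)) mod J)))"
      "c < dim_col (mat N (length ({} # Fp) + length [{}::nat set] * J) (\<lambda>(i, c).
     if c < length ({} # Fp) then Zprod Z i (({} # Fp) ! c)
     else Zprod Z i ([{}::nat set] ! ((c - length ({} # Fp)) div J)) * x i ((c - length ({} # Fp)) mod J)))"
    then have i: "i < N" and c: "c < 1 + length Fp + J" by auto
    show "mat N (1 + length Fp + J) (\<lambda>(i, c). if c = 0 then 1 else if c \<le> length Fp then Zprod Z i (Fp ! (c - 1))
            else x i (c - 1 - length Fp)) $$ (i, c) =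
        mat N (length ({} # Fp) + length [{}::nat set] * J) (\<lambda>(i, c).
          if c < length ({} # Fp) then Zprod Z i (({} # Fp) ! c)
          else Zprod Z i ([{}::nat set] ! ((c - length ({} # Fp)) div J)) * x i ((c - length ({} # Fp)) mod J)) $$ (i, c)"
    proof (cases "c < 1 + length Fp")
      case True
      then show ?thesis using i c by (auto simp: nth_Cons')
    next
      case False
      have d: "c - Suc (length Fp) < J" using c False by simp
      then show ?thesis using i c False by simp
    qed
  qed auto
qed

lemma caseF:
  fixes K N J :: nat and Y :: "nat \<Rightarrow> real" and x Z :: "nat \<Rightarrow> nat \<Rightarrow> real"
    and Fp Fm :: "nat set list"
  assumes Z_pm1: "\<And>i k. i < N \<Longrightarrow> k < K \<Longrightarrow> Z i k = 1 \<or> Z i k = -1"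
    and Fp_distinct: "distinct Fp" and Fm_distinct: "distinct Fm"
    and Fp_sub: "set Fp \<subseteq> effects K"
    and Fm_def: "set Fm = effects K - set Fp"
    and Fm_ne: "Fm \<noteq> []"
    and chi_nonsing: "invertible_mat (transpose_mat (chiL K N J Z x) * chiL K N J Z x)"
  shows "tau_u (length Fp) (X_F N J Z x Fp) (vec N Y)
           = Cmat K Fp *\<^sub>v Yhat_r (2^K) (chiL K N J Z x) (vec N Y) (R_F (2^K) J (Cmat K Fm))
       \<and> Omega_u (length Fp) (X_F N J Z x Fp) (vec N Y)
           = Cmat K Fp * Psi_r (2^K) (chiL K N J Z x) (vec N Y) (R_F (2^K) J (Cmat K Fm)) * transpose_mat (Cmat K Fp)"
proof -
  have Cm: "Cmat K Fm \<in> carrier_mat (length Fm) (2^K)" unfolding Cmat_def by simp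
  have Us: "\<forall>S\<in>set [{}::nat set]. S \<subseteq> {..<K}" "distinct [{}::nat set]" by auto
  have Gam: "GamF (2^K) J \<in> carrier_mat ((2^K - 1) * J) (2^K * J)" unfolding GamF_def by simp
  have Gams: "GamFs (2^K) J \<in> carrier_mat (2^K * J) ((2^K - 1) * J)" unfolding GamFs_def by simp
  note G = case_generic[OF Z_pm1 Fp_distinct Fm_distinct Fp_sub Fm_def Fm_ne chi_nonsing Us Gam Gams
      GamF_GG GamF_GB GamF_compl, of Y]
  moreover have XF: "X_F N J Z x Fp = chiL K N J Z x * BB K J ({} # Fp) [{}]"
    by (rule XF_eq) (use Z_pm1 Fp_sub in auto)
  moreover have RF: "R_F (2^K) J (Cmat K Fm) = bd (Cmat K Fm) (GamF (2^K) J)"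
    by (rule RF_eq[OF Cm])
  ultimately show ?thesis by metis
qed

theorem proposition2:
  fixes K N J :: nat
    and Y :: "nat \<Rightarrow> real"
    and x :: "nat \<Rightarrow> nat \<Rightarrow> real"
    and Z :: "nat \<Rightarrow> nat \<Rightarrow> real"
    and Fp Fm :: "nat set list"
  assumes Z_pm1: "\<And>i k. i < N \<Longrightarrow> k < K \<Longrightarrow> Z i k = 1 \<or> Z i k = -1"
    and x_centered: "\<And>j. j < J \<Longrightarrow> (\<Sum>i<N. x i j) = 0"
    and Fp_distinct: "distinct Fp" and Fm_distinct: "distinct Fm"
    and Fp_sub: "set Fp \<subseteq> effects K"
    and Fm_def: "set Fm = effects K - set Fp"
    and Fm_ne: "Fm \<noteq> []"
    and chi_nonsing: "invertible_mat (transpose_mat (chiL K N J Z x) * chiL K N J Z x)"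
  shows
   "(let Q = 2 ^ K; p = length Fp; Yv = vec N Y; Cp = Cmat K Fp; Cm = Cmat K Fm;
         chi = chiL K N J Z x
     in tau_u p (X_N N Z Fp) Yv = Cp *\<^sub>v Yhat_r Q chi Yv (R_N Q J Cm)
      \<and> Omega_u p (X_N N Z Fp) Yv = Cp * Psi_r Q chi Yv (R_N Q J Cm) * transpose_mat Cp
      \<and> tau_u p (X_F N J Z x Fp) Yv = Cp *\<^sub>v Yhat_r Q chi Yv (R_F Q J Cm)
      \<and> Omega_u p (X_F N J Z x Fp) Yv = Cp * Psi_r Q chi Yv (R_F Q J Cm) * transpose_mat Cp
      \<and> tau_u p (X_L N J Z x Fp) Yv = Cp *\<^sub>v Yhat_r Q chi Yv (R_L Q J Cm)
      \<and> Omega_u p (X_L N J Z x Fp) Yv = Cp * Psi_r Q chi Yv (R_L Q J Cm) * transpose_mat Cp)"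
proof -
  note N = caseN[OF Z_pm1 Fp_distinct Fm_distinct Fp_sub Fm_def Fm_ne chi_nonsing, of Y]
  note F = caseF[OF Z_pm1 Fp_distinct Fm_distinct Fp_sub Fm_def Fm_ne chi_nonsing, of Y]
  note L = caseL[OF Z_pm1 Fp_distinct Fm_distinct Fp_sub Fm_def Fm_ne chi_nonsing, of Y]
  show ?thesis unfolding Let_def using N F L by blast
qed

end
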